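(* Let $F$ be a field with $\operatorname{char}F\ne2$, let $a,b\in F$ with $E=F(\sqrt a,\sqrt b)$ satisfying $[E:F]=4$. Suppose there exist (in a fixed algebraic closure of $F$) a Galois extension $D^{a,b}$ of $F$ with $E\subseteq D^{a,b}$, $\operatorname{Gal}(D^{a,b}/F)\cong D$ and $\operatorname{Gal}(D^{a,b}/F(\sqrt{ab}))\cong C$, and a cyclic quartic extension $C^a$ of $F$ with $F(\sqrt a)\subseteq C^a$. Let $K$ be the composite $D^{a,b}C^a$. Then $K/F$ is Galois and $\operatorname{Gal}(K/F)\cong D\curlywedge C$.
   Context: $D$ is the dihedral group of order 8, $C$ the cyclic group of order 4. $D\curlywedge C$ is the pullback of a homomorphism $\lambda:D\to\mathbb Z/2\mathbb Z$ with kernel isomorphic to $\mathbb Z/2\times\mathbb Z/2$ and the nontrivial homomorphism $\eta:C\to\mathbb Z/2\mathbb Z$: $D\curlywedge C=\{(u,v)\in D\times C:\lambda(u)=\eta(v)\}$, of order 16. *)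

theory Defs
  imports "HOL-Algebra.Elementary_Groups" "HOL-Computational_Algebra.Polynomial"
begin

definition is_subfield :: "'a::field set \<Rightarrow> bool" where
  "is_subfield K \<longleftrightarrow> 0 \<in> K \<and> 1 \<in> K \<and>
     (\<forall>x\<in>K. \<forall>y\<in>K. x + y \<in> K \<and> x * y \<in> K) \<and>
     (\<forall>x\<in>K. - x \<in> K) \<and> (\<forall>x\<in>K. x \<noteq> 0 \<longrightarrow> inverse x \<in> K)"

text \<open>Smallest subfield containing F and S, i.e. F(S); composita are adjoin K L.\<close>
definition adjoin :: "'a::field set \<Rightarrow> 'a set \<Rightarrow> 'a set" where
  "adjoin F S = \<Inter> {L. is_subfield L \<and> F \<union> S \<subseteq> L}"

definition algebraic_over :: "'a::field set \<Rightarrow> 'a \<Rightarrow> bool" where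
  "algebraic_over F x \<longleftrightarrow> (\<exists>p. p \<noteq> 0 \<and> (\<forall>i. coeff p i \<in> F) \<and> poly p x = 0)"

definition ext_degree :: "'a::field set \<Rightarrow> 'a set \<Rightarrow> nat \<Rightarrow> bool" where
  "ext_degree F E n \<longleftrightarrow> (\<exists>B. finite B \<and> card B = n \<and> B \<subseteq> E \<and>
     (\<forall>c. (\<forall>x\<in>B. c x \<in> F) \<and> (\<Sum>x\<in>B. c x * x) = 0 \<longrightarrow> (\<forall>x\<in>B. c x = 0)) \<and>
     (\<forall>y\<in>E. \<exists>c. (\<forall>x\<in>B. c x \<in> F) \<and> y = (\<Sum>x\<in>B. c x * x)))"

definition gal_group :: "'a::field set \<Rightarrow> 'a set \<Rightarrow> ('a \<Rightarrow> 'a) monoid" where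
  "gal_group K F = \<lparr>carrier = {\<sigma>. bij_betw \<sigma> K K \<and>
        (\<forall>x\<in>K. \<forall>y\<in>K. \<sigma> (x + y) = \<sigma> x + \<sigma> y \<and> \<sigma> (x * y) = \<sigma> x * \<sigma> y) \<and>
        (\<forall>x\<in>F. \<sigma> x = x) \<and> (\<forall>x. x \<notin> K \<longrightarrow> \<sigma> x = x)},
     monoid.mult = (\<lambda>\<sigma> \<tau>. \<sigma> \<circ> \<tau>), one = id\<rparr>"

definition fixed_field :: "'a::field set \<Rightarrow> 'a set \<Rightarrow> 'a set" where
  "fixed_field K F = {x\<in>K. \<forall>\<sigma>\<in>carrier (gal_group K F). \<sigma> x = x}"

definition galois :: "'a::field set \<Rightarrow> 'a set \<Rightarrow> bool" where
  "galois F K \<longleftrightarrow> is_subfield F \<and> is_subfield K \<and> F \<subseteq> K \<and>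
     (\<exists>n. ext_degree F K n) \<and> fixed_field K F = F"

text \<open>Dihedral group of order 8: pairs (i,s), i mod 4 rotation, s mod 2 reflection,
  (i,s)(j,t) = (i + (-1)^s j, s + t).\<close>
definition dihedral8 :: "(int \<times> int) monoid" where
  "dihedral8 = \<lparr>carrier = {0..<4} \<times> {0..<2},
     monoid.mult = (\<lambda>(i,s) (j,t). ((i + (if s = 0 then j else - j)) mod 4, (s + t) mod 2)),
     one = (0, 0)\<rparr>"

abbreviation cyclic4 :: "int monoid" where
  "cyclic4 \<equiv> integer_mod_group 4"

text \<open>\<lambda> : D \<rightarrow> Z/2 with kernel {(0,0),(2,0),(0,1),(2,1)} \<cong> Z/2 \<times> Z/2,
  \<eta> : C \<rightarrow> Z/2 the nontrivial homomorphism (values in {0,1} = Z/2).\<close>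
definition lambdaD :: "int \<times> int \<Rightarrow> int" where
  "lambdaD u = fst u mod 2"

definition etaC :: "int \<Rightarrow> int" where
  "etaC v = v mod 2"

definition pullback :: "('a, 'c) monoid_scheme \<Rightarrow> ('b, 'd) monoid_scheme \<Rightarrow>
    ('a \<Rightarrow> 'e) \<Rightarrow> ('b \<Rightarrow> 'e) \<Rightarrow> ('a \<times> 'b) monoid" where
  "pullback G H l e = \<lparr>carrier = {(u, v). u \<in> carrier G \<and> v \<in> carrier H \<and> l u = e v},
     monoid.mult = (\<lambda>(u, v) (u', v'). (u \<otimes>\<^bsub>G\<^esub> u', v \<otimes>\<^bsub>H\<^esub> v')),
     one = (\<one>\<^bsub>G\<^esub>, \<one>\<^bsub>H\<^esub>)\<rparr>"

abbreviation DwedgeC :: "((int \<times> int) \<times> int) monoid" where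
  "DwedgeC \<equiv> pullback dihedral8 cyclic4 lambdaD etaC"

end

theory Submission
  imports Defs
begin


definition fhom :: "'a::field set \<Rightarrow> ('a \<Rightarrow> 'a) \<Rightarrow> bool" where
  "fhom K s \<longleftrightarrow> (\<forall>x\<in>K. \<forall>y\<in>K. s (x + y) = s x + s y \<and> s (x * y) = s x * s y)"

lemma sf_0: "is_subfield K \<Longrightarrow> 0 \<in> K" by (simp add: is_subfield_def)
lemma sf_1: "is_subfield K \<Longrightarrow> 1 \<in> K" by (simp add: is_subfield_def)
lemma sf_add: "is_subfield K \<Longrightarrow> x \<in> K \<Longrightarrow> y \<in> K \<Longrightarrow> x + y \<in> K" by (simp add: is_subfield_def)
lemma sf_mult: "is_subfield K \<Longrightarrow> x \<in> K \<Longrightarrow> y \<in> K \<Longrightarrow> x * y \<in> K" by (simp add: is_subfield_def)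
lemma sf_neg: "is_subfield K \<Longrightarrow> x \<in> K \<Longrightarrow> - x \<in> K" by (simp add: is_subfield_def)
lemma sf_inverse: "is_subfield K \<Longrightarrow> x \<in> K \<Longrightarrow> inverse x \<in> K"
  by (cases "x = 0") (auto simp add: is_subfield_def)
lemma sf_diff: "is_subfield K \<Longrightarrow> x \<in> K \<Longrightarrow> y \<in> K \<Longrightarrow> x - y \<in> K"
  using sf_add sf_neg by (metis diff_conv_add_uminus)
lemma sf_divide: "is_subfield K \<Longrightarrow> x \<in> K \<Longrightarrow> y \<in> K \<Longrightarrow> x / y \<in> K"
  using sf_mult sf_inverse by (metis divide_inverse)
lemma sf_power: "is_subfield K \<Longrightarrow> x \<in> K \<Longrightarrow> x ^ n \<in> K"
  by (induction n) (auto intro: sf_1 sf_mult)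
lemma sf_2: "is_subfield K \<Longrightarrow> 2 \<in> K"
  using sf_add[OF _ sf_1 sf_1] by (metis one_add_one)
lemma sf_sum: "is_subfield K \<Longrightarrow> (\<And>x. x \<in> A \<Longrightarrow> f x \<in> K) \<Longrightarrow> sum f A \<in> K"
  by (induction A rule: infinite_finite_induct) (auto intro: sf_0 sf_add)

lemmas sf_closed = sf_0 sf_1 sf_add sf_mult sf_neg sf_inverse sf_diff sf_divide sf_power sf_2

lemma fh_add: "fhom K s \<Longrightarrow> x \<in> K \<Longrightarrow> y \<in> K \<Longrightarrow> s (x + y) = s x + s y" by (simp add: fhom_def)
lemma fh_mult: "fhom K s \<Longrightarrow> x \<in> K \<Longrightarrow> y \<in> K \<Longrightarrow> s (x * y) = s x * s y" by (simp add: fhom_def)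
lemma fh_0: "is_subfield K \<Longrightarrow> fhom K s \<Longrightarrow> s 0 = 0"
proof -
  assume "is_subfield K" "fhom K s"
  then have "s (0 + 0) = s 0 + s 0" using fh_add sf_0 by blast
  then show ?thesis by (metis add_cancel_right_right)
qed
lemma fh_neg: "is_subfield K \<Longrightarrow> fhom K s \<Longrightarrow> x \<in> K \<Longrightarrow> s (- x) = - s x"
  using fh_add[of K s x "-x"] sf_neg fh_0 by (metis add.right_inverse add_eq_0_iff)
lemma fh_diff: "is_subfield K \<Longrightarrow> fhom K s \<Longrightarrow> x \<in> K \<Longrightarrow> y \<in> K \<Longrightarrow> s (x - y) = s x - s y"
  using fh_add[of K s x "-y"] fh_neg[of K s y] sf_neg by (metis diff_conv_add_uminus)
lemma fh_1: "is_subfield K \<Longrightarrow> fhom K s \<Longrightarrow> inj_on s K \<Longrightarrow> s 1 = 1"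
proof -
  assume K: "is_subfield K" and h: "fhom K s" and i: "inj_on s K"
  have "s 1 = s 1 * s 1" using fh_mult[OF h, of 1 1] sf_1[OF K] by simp
  moreover have "s 1 \<noteq> 0" using i fh_0[OF K h] sf_0[OF K] sf_1[OF K]
    by (metis inj_on_contraD zero_neq_one)
  ultimately show ?thesis by (metis mult_cancel_left2)
qed
lemma fh_inverse: "is_subfield K \<Longrightarrow> fhom K s \<Longrightarrow> inj_on s K \<Longrightarrow> x \<in> K \<Longrightarrow> s (inverse x) = inverse (s x)"
proof -
  assume K: "is_subfield K" and h: "fhom K s" and i: "inj_on s K" and x: "x \<in> K"
  show ?thesis
  proof (cases "x = 0")
    case True then show ?thesis using fh_0[OF K h] by simp
  next
    case False
    have "s x * s (inverse x) = 1" using fh_mult[OF h x sf_inverse[OF K x]] fh_1[OF K h i] False by simp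
    then show ?thesis by (metis inverse_unique)
  qed
qed
lemma fh_divide: "is_subfield K \<Longrightarrow> fhom K s \<Longrightarrow> inj_on s K \<Longrightarrow> x \<in> K \<Longrightarrow> y \<in> K \<Longrightarrow> s (x / y) = s x / s y"
  by (simp add: divide_inverse fh_mult fh_inverse sf_inverse)
lemma fh_power: "is_subfield K \<Longrightarrow> fhom K s \<Longrightarrow> inj_on s K \<Longrightarrow> x \<in> K \<Longrightarrow> s (x ^ n) = s x ^ n"
  by (induction n) (auto simp: fh_1 fh_mult sf_power)
lemma fh_2: "is_subfield K \<Longrightarrow> fhom K s \<Longrightarrow> inj_on s K \<Longrightarrow> s 2 = 2"
  using fh_add[of K s 1 1] fh_1 sf_1 by (metis one_add_one)
lemma fh_sum: "is_subfield K \<Longrightarrow> fhom K s \<Longrightarrow> (\<And>x. x \<in> A \<Longrightarrow> f x \<in> K) \<Longrightarrow> s (sum f A) = (\<Sum>x\<in>A. s (f x))"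
  by (induction A rule: infinite_finite_induct) (auto simp: fh_0 fh_add sf_sum)

lemma fh_inj: "is_subfield K \<Longrightarrow> fhom K s \<Longrightarrow> s 1 \<noteq> 0 \<Longrightarrow> inj_on s K"
proof (rule inj_onI)
  fix x y assume K: "is_subfield K" and h: "fhom K s" and s1: "s 1 \<noteq> 0" and x: "x \<in> K" and y: "y \<in> K" and e: "s x = s y"
  have d: "s (x - y) = 0" using fh_diff[OF K h x y] e by simp
  show "x = y"
  proof (rule ccontr)
    assume "x \<noteq> y"
    then have "(x - y) * inverse (x - y) = 1" by simp
    then have "s 1 = s (x - y) * s (inverse (x - y))"
      using fh_mult[OF h sf_diff[OF K x y] sf_inverse[OF K sf_diff[OF K x y]]] by simp
    then show False using d s1 by simp
  qed
qed

lemma subfield_UNIV: "is_subfield (UNIV :: 'a::field set)" by (simp add: is_subfield_def)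

lemma adjoin_subfield: "is_subfield (adjoin F S)"
  unfolding adjoin_def is_subfield_def by auto

lemma adjoin_sup: "F \<union> S \<subseteq> adjoin F S"
  unfolding adjoin_def by auto

lemma adjoin_least: "is_subfield L \<Longrightarrow> F \<union> S \<subseteq> L \<Longrightarrow> adjoin F S \<subseteq> L"
  unfolding adjoin_def by auto

lemma gal_carrier: "s \<in> carrier (gal_group K F) \<longleftrightarrow> bij_betw s K K \<and> fhom K s \<and> (\<forall>x\<in>F. s x = x) \<and> (\<forall>x. x \<notin> K \<longrightarrow> s x = x)"
  by (simp add: gal_group_def fhom_def)
lemma gal_mult[simp]: "s \<otimes>\<^bsub>gal_group K F\<^esub> t = s \<circ> t" by (simp add: gal_group_def)
lemma gal_one[simp]: "\<one>\<^bsub>gal_group K F\<^esub> = id" by (simp add: gal_group_def)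

lemma gal_inj: "s \<in> carrier (gal_group K F) \<Longrightarrow> inj_on s K"
  by (simp add: gal_carrier bij_betw_def)
lemma gal_fhom: "s \<in> carrier (gal_group K F) \<Longrightarrow> fhom K s"
  by (simp add: gal_carrier)
lemma gal_maps: "s \<in> carrier (gal_group K F) \<Longrightarrow> x \<in> K \<Longrightarrow> s x \<in> K"
  by (auto simp add: gal_carrier bij_betw_def)
lemma gal_fix: "s \<in> carrier (gal_group K F) \<Longrightarrow> x \<in> F \<Longrightarrow> s x = x"
  by (simp add: gal_carrier)
lemma gal_out: "s \<in> carrier (gal_group K F) \<Longrightarrow> x \<notin> K \<Longrightarrow> s x = x"
  by (simp add: gal_carrier)
lemma gal_id: "id \<in> carrier (gal_group K F)"
  by (simp add: gal_carrier fhom_def)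
lemma gal_comp: "s \<in> carrier (gal_group K F) \<Longrightarrow> t \<in> carrier (gal_group K F) \<Longrightarrow> s \<circ> t \<in> carrier (gal_group K F)"
proof -
  assume a: "s \<in> carrier (gal_group K F)" "t \<in> carrier (gal_group K F)"
  then have "bij_betw (s \<circ> t) K K" using bij_betw_trans by (auto simp: gal_carrier)
  moreover have "t x \<in> K" if "x \<in> K" for x using a that gal_maps by blast
  ultimately show ?thesis using a unfolding gal_carrier fhom_def by (auto simp: bij_betw_def)
qed

lemma gal_monoid: "monoid (gal_group K F)"
  by (rule monoidI) (auto simp: gal_comp gal_id)

lemma iso_inv_gen:
  assumes "h \<in> iso G H" "monoid G"
  shows "inv_into (carrier G) h \<in> iso H G"
proof -
  have h: "h \<in> hom G H" "bij_betw h (carrier G) (carrier H)"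
    using assms by (auto simp add: iso_def bij_betw_inv_into)
  then have HG: "bij_betw (inv_into (carrier G) h) (carrier H) (carrier G)"
    by (simp add: bij_betw_inv_into)
  have "inv_into (carrier G) h \<in> hom H G"
    unfolding hom_def
  proof safe
    show *: "\<And>x. x \<in> carrier H \<Longrightarrow> inv_into (carrier G) h x \<in> carrier G"
      by (meson HG bij_betwE)
    show "inv_into (carrier G) h (x \<otimes>\<^bsub>H\<^esub> y) = inv_into (carrier G) h x \<otimes>\<^bsub>G\<^esub> inv_into (carrier G) h y"
      if "x \<in> carrier H" "y \<in> carrier H" for x y
    proof (rule inv_into_f_eq)
      show "inj_on h (carrier G)"
        using bij_betw_def h(2) by blast
      show "inv_into (carrier G) h x \<otimes>\<^bsub>G\<^esub> inv_into (carrier G) h y \<in> carrier G"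
        using * that monoid.m_closed[OF assms(2)] by blast
      show "h (inv_into (carrier G) h x \<otimes>\<^bsub>G\<^esub> inv_into (carrier G) h y) = x \<otimes>\<^bsub>H\<^esub> y"
        using h bij_betw_inv_into_right [of h] * that unfolding hom_def by simp
    qed
  qed
  then show ?thesis
    by (simp add: Group.iso_def bij_betw_inv_into h)
qed


lemma coeff_mult_in: "is_subfield L \<Longrightarrow> (\<And>i. coeff p i \<in> L) \<Longrightarrow> (\<And>i. coeff q i \<in> L) \<Longrightarrow> coeff (p * q) n \<in> L"
  unfolding coeff_mult by (auto intro!: sf_sum sf_mult)

lemma coeff_prod_in:
  assumes L: "is_subfield L" and c: "\<And>t i. t \<in> A \<Longrightarrow> coeff (P t) i \<in> L"
  shows "coeff (\<Prod>t\<in>A. P t) n \<in> L"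
  using c
proof (induction A arbitrary: n rule: infinite_finite_induct)
  case (infinite A) then show ?case using L by (simp add: coeff_1 sf_0 sf_1)
next
  case empty then show ?case using L by (simp add: coeff_1 sf_0 sf_1)
next
  case (insert x F) then show ?case using L by (simp add: coeff_mult_in)
qed

lemma map_poly_mult_fh:
  assumes L: "is_subfield L" and h: "fhom L f" and p: "\<And>i. coeff p i \<in> L" and q: "\<And>i. coeff q i \<in> L"
  shows "map_poly f (p * q) = map_poly f p * map_poly f q"
proof (rule poly_eqI)
  fix n
  have f0: "f 0 = 0" using fh_0[OF L h] .
  show "coeff (map_poly f (p * q)) n = coeff (map_poly f p * map_poly f q) n"
    unfolding coeff_map_poly[of f, OF f0] coeff_mult
    by (simp add: fh_sum[OF L h] fh_mult[OF h] p q sf_mult[OF L] coeff_map_poly[of f, OF f0])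
qed

lemma map_poly_prod_lin:
  assumes L: "is_subfield L" and h: "fhom L f" and i: "inj_on f L" and c: "\<And>t. t \<in> A \<Longrightarrow> c t \<in> L"
  shows "map_poly f (\<Prod>t\<in>A. [:- c t, 1:]) = (\<Prod>t\<in>A. [:- f (c t), 1:])"
  using c
proof (induction A rule: infinite_finite_induct)
  case (infinite A) then show ?case using fh_1[OF L h i] by simp
next
  case empty then show ?case using fh_1[OF L h i] by simp
next
  case (insert x F)
  have c1: "coeff [:- c x, 1:] j \<in> L" for j
    using insert L by (cases j; cases "j - 1") (auto simp: sf_closed)
  have c2: "coeff (\<Prod>t\<in>F. [:- c t, 1:]) j \<in> L" for j
    using insert L c1 by (intro coeff_prod_in) (auto simp: coeff_pCons split: nat.splits intro: sf_closed)
  have f0: "f 0 = 0" using fh_0[OF L h] .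
  have m: "map_poly f [:- c x, 1:] = [:- f (c x), 1:]"
    using f0 fh_neg[OF L h] fh_1[OF L h i] insert by (simp add: map_poly_pCons)
  show ?case using insert map_poly_mult_fh[OF L h c1 c2] m by simp
qed

lemma fh_poly:
  assumes K: "is_subfield K" and h: "fhom K s" and i: "inj_on s K" and c: "\<And>j. coeff p j \<in> K"
    and fxc: "\<And>j. s (coeff p j) = coeff p j" and y: "y \<in> K"
  shows "s (poly p y) = poly p (s y)"
  unfolding poly_altdef
  by (simp add: fh_sum[OF K h] fh_mult[OF h] c y sf_power[OF K] fh_power[OF K h i] fxc sf_mult[OF K])

lemma galois_facts: "galois F L \<Longrightarrow> is_subfield F \<and> is_subfield L \<and> F \<subseteq> L \<and> fixed_field L F = F"
  by (simp add: galois_def)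

lemma norm_root:
  assumes gal: "galois F L" and fin: "finite (carrier (gal_group L F))"
    and K: "is_subfield K" and LK: "L \<subseteq> K" and h: "fhom K s" and i: "inj_on s K"
    and fx: "\<And>x. x \<in> F \<Longrightarrow> s x = x" and y: "y \<in> L"
  shows "\<exists>t\<in>carrier (gal_group L F). s y = t y"
proof -
  define G where "G = carrier (gal_group L F)"
  have L: "is_subfield L" and FL: "F \<subseteq> L" and ff: "fixed_field L F = F" using galois_facts[OF gal] by auto
  define p where "p = (\<Prod>t\<in>G. [:- t y, 1:])"
  have tyL: "t y \<in> L" if "t \<in> G" for t using that y gal_maps G_def by blast
  have cL: "coeff p j \<in> L" for j
    unfolding p_def using L tyL
    by (intro coeff_prod_in) (auto simp: coeff_pCons split: nat.splits intro: sf_closed)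
  have cF: "coeff p j \<in> F" for j
  proof -
    have "\<forall>t'\<in>G. t' (coeff p j) = coeff p j"
    proof
      fix t' assume t': "t' \<in> G"
      have ht: "fhom L t'" and it: "inj_on t' L" using t' G_def gal_fhom gal_inj by auto
      have "map_poly t' p = (\<Prod>t\<in>G. [:- t' (t y), 1:])"
        unfolding p_def using map_poly_prod_lin[OF L ht it, of G "\<lambda>t. t y"] tyL by simp
      also have "\<dots> = (\<Prod>t\<in>G. [:- ((t' \<circ> t) y), 1:])" by simp
      also have "\<dots> = (\<Prod>t\<in>(\<lambda>t. t' \<circ> t) ` G. [:- t y, 1:])"
      proof -
        have inj: "inj_on (\<lambda>t. t' \<circ> t) G"
        proof (rule inj_onI)
          fix t1 t2 assume t1: "t1 \<in> G" and t2: "t2 \<in> G" and e: "t' \<circ> t1 = t' \<circ> t2"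
          show "t1 = t2"
          proof
            fix x show "t1 x = t2 x"
            proof (cases "x \<in> L")
              case True
              then have "t' (t1 x) = t' (t2 x)" using e by (metis comp_apply)
              then show ?thesis using it True t1 t2 G_def gal_maps by (metis inj_onD)
            next
              case False then show ?thesis using t1 t2 G_def gal_out by metis
            qed
          qed
        qed
        then show ?thesis by (simp add: prod.reindex)
      qed
      also have "(\<lambda>t. t' \<circ> t) ` G = G"
      proof (rule endo_inj_surj[OF fin[folded G_def]])
        show "(\<lambda>t. t' \<circ> t) ` G \<subseteq> G" using t' G_def gal_comp by blast
        show "inj_on (\<lambda>t. t' \<circ> t) G"
        proof (rule inj_onI)
          fix t1 t2 assume t1: "t1 \<in> G" and t2: "t2 \<in> G" and e: "t' \<circ> t1 = t' \<circ> t2"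
          show "t1 = t2"
          proof
            fix x show "t1 x = t2 x"
            proof (cases "x \<in> L")
              case True
              then have "t' (t1 x) = t' (t2 x)" using e by (metis comp_apply)
              then show ?thesis using it True t1 t2 G_def gal_maps by (metis inj_onD)
            next
              case False then show ?thesis using t1 t2 G_def gal_out by metis
            qed
          qed
        qed
      qed
      finally have "map_poly t' p = p" unfolding p_def .
      then have "coeff (map_poly t' p) j = coeff p j" by simp
      then show "t' (coeff p j) = coeff p j" using coeff_map_poly[of t' p j] fh_0[OF L ht] by simp
    qed
    then have "coeff p j \<in> fixed_field L F" unfolding fixed_field_def G_def using cL by blast
    then show ?thesis using ff by simp
  qed
  have idG: "id \<in> G" using G_def gal_id by blast
  have fin': "finite G" using fin G_def by simp
  have "poly p y = 0" unfolding p_def poly_prod using idG fin'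
    by (simp add: prod_zero_iff) (rule bexI[of _ id], auto)
  moreover have "s (poly p y) = poly p (s y)"
    using fh_poly[OF K h i, of p y] cL LK cF fx y by auto
  ultimately have "poly p (s y) = 0" using fh_0[OF K h] by simp
  then have "\<exists>t\<in>G. s y - t y = 0" unfolding p_def poly_prod using fin' by (simp add: prod_zero_iff)
  then show ?thesis using G_def by auto
qed

definition restr :: "('a \<Rightarrow> 'a) \<Rightarrow> 'a set \<Rightarrow> 'a \<Rightarrow> 'a" where
  "restr s L = (\<lambda>x. if x \<in> L then s x else x)"

lemma restrict_gal:
  assumes gal: "galois F L" and fin: "finite (carrier (gal_group L F))"
    and K: "is_subfield K" and LK: "L \<subseteq> K" and s: "s \<in> carrier (gal_group K F)"
  shows "restr s L \<in> carrier (gal_group L F)" "\<And>y. y \<in> L \<Longrightarrow> s y \<in> L"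
proof -
  define G where "G = carrier (gal_group L F)"
  have L: "is_subfield L" and FL: "F \<subseteq> L" and ff: "fixed_field L F = F" using galois_facts[OF gal] by auto
  have h: "fhom K s" and i: "inj_on s K" and fx: "\<And>x. x \<in> F \<Longrightarrow> s x = x"
    using s gal_fhom gal_inj gal_fix by auto
  have maps: "s y \<in> L" if "y \<in> L" for y
    using norm_root[OF gal fin K LK h i fx that] gal_maps that by metis
  then show "\<And>y. y \<in> L \<Longrightarrow> s y \<in> L" .
  have iL: "inj_on s L" using i LK inj_on_subset by blast
  have surj: "y \<in> s ` L" if y: "y \<in> L" for y
  proof -
    define Orb where "Orb = (\<lambda>t. t y) ` G"
    have fO: "finite Orb" using fin G_def Orb_def by simp
    have OL: "Orb \<subseteq> L" using Orb_def G_def gal_maps y by blast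
    have "s ` Orb \<subseteq> Orb"
    proof
      fix z assume "z \<in> s ` Orb"
      then obtain t where t: "t \<in> G" and z: "z = s (t y)" using Orb_def by auto
      have ty: "t y \<in> L" using t G_def gal_maps y by blast
      obtain t2 where t2: "t2 \<in> G" "s (t y) = t2 (t y)" using norm_root[OF gal fin K LK h i fx ty] G_def by blast
      have "t2 \<circ> t \<in> G" using t t2 gal_comp G_def by blast
      then show "z \<in> Orb" using z t2 Orb_def by (metis comp_apply image_eqI)
    qed
    then have "s ` Orb = Orb" using endo_inj_surj[OF fO] iL OL inj_on_subset by blast
    moreover have "y \<in> Orb" using Orb_def G_def gal_id by (metis id_apply image_eqI)
    ultimately show ?thesis using OL by blast
  qed
  have "bij_betw (restr s L) L L"
    unfolding bij_betw_def restr_def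
    using iL maps surj by (auto simp: inj_on_def image_iff)
  moreover have "fhom L (restr s L)" unfolding fhom_def restr_def
    using h LK L by (auto simp: sf_add sf_mult intro!: fh_add fh_mult)
  ultimately show "restr s L \<in> carrier (gal_group L F)"
    unfolding gal_carrier restr_def using fx FL by auto
qed


lemma i4: "{0..<4::int} = {0,1,2,3}" by code_simp
lemma i2: "{0..<2::int} = {0,1}" by code_simp
lemma D8_carrier: "carrier dihedral8 = {(0,0),(1,0),(2,0),(3,0),(0,1),(1,1),(2,1),(3,1)}"
  by (simp add: dihedral8_def i4 i2) blast

lemma D8_mult: "a \<otimes>\<^bsub>dihedral8\<^esub> b = ((fst a + (if snd a = 0 then fst b else - fst b)) mod 4, (snd a + snd b) mod 2)"
  by (simp add: dihedral8_def case_prod_beta)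

lemma D8_one: "\<one>\<^bsub>dihedral8\<^esub> = (0,0)" by (simp add: dihedral8_def)

lemma Z4_carrier: "carrier cyclic4 = {0,1,2,3}" by (simp add: carrier_integer_mod_group i4)

lemma D8_cases: "u \<in> carrier dihedral8 \<Longrightarrow> u = (0,0) \<or> u = (1,0) \<or> u = (2,0) \<or> u = (3,0) \<or> u = (0,1) \<or> u = (1,1) \<or> u = (2,1) \<or> u = (3,1)"
  by (simp add: D8_carrier)

lemma hom_D8_Z4_even:
  assumes h: "h \<in> hom dihedral8 cyclic4" and u: "u \<in> carrier dihedral8"
  shows "h u \<in> {0, 2}"
proof -
  have hm: "h (a \<otimes>\<^bsub>dihedral8\<^esub> b) = (h a + h b) mod 4" if "a \<in> carrier dihedral8" "b \<in> carrier dihedral8" for a b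
    using h that by (simp add: hom_def)
  have hc: "h a \<in> {0,1,2,3}" if "a \<in> carrier dihedral8" for a
    using hom_in_carrier[OF h that] Z4_carrier by simp
  have e1: "h (0,1) \<in> {0,2}"
    using hm[of "(0,1)" "(0,1)"] hm[of "(0,0)" "(0,0)"] hc[of "(0,1)"] hc[of "(0,0)"] by (auto simp: D8_mult D8_carrier)
  have e2: "h (1,1) \<in> {0,2}"
    using hm[of "(1,1)" "(1,1)"] hm[of "(0,0)" "(0,0)"] hc[of "(1,1)"] hc[of "(0,0)"] by (auto simp: D8_mult D8_carrier)
  have e3: "h (1,0) \<in> {0,2}"
    using hm[of "(1,1)" "(0,1)"] e1 e2 by (auto simp: D8_mult D8_carrier)
  have e4: "h (2,0) \<in> {0,2}"
    using hm[of "(1,0)" "(1,0)"] e3 by (auto simp: D8_mult D8_carrier)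
  have e5: "h (3,0) \<in> {0,2}"
    using hm[of "(2,0)" "(1,0)"] e3 e4 by (auto simp: D8_mult D8_carrier)
  have e0: "h (0,0) \<in> {0,2}"
    using hm[of "(2,0)" "(2,0)"] e4 by (auto simp: D8_mult D8_carrier)
  have e6: "h (2,1) \<in> {0,2}"
    using hm[of "(2,0)" "(0,1)"] e4 e1 by (auto simp: D8_mult D8_carrier)
  have e7: "h (3,1) \<in> {0,2}"
    using hm[of "(3,0)" "(0,1)"] e5 e1 by (auto simp: D8_mult D8_carrier)
  have u8: "u = (0,0) \<or> u = (1,0) \<or> u = (2,0) \<or> u = (3,0) \<or> u = (0,1) \<or> u = (1,1) \<or> u = (2,1) \<or> u = (3,1)"
    using u by (simp add: D8_carrier)
  then show ?thesis using e0 e1 e2 e3 e4 e5 e6 e7 by (elim disjE) simp_all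
qed

lemma D8_char:
  assumes c01: "\<And>u. u \<in> carrier dihedral8 \<Longrightarrow> c u \<in> {0,1}"
    and cm: "\<And>u v. u \<in> carrier dihedral8 \<Longrightarrow> v \<in> carrier dihedral8 \<Longrightarrow> c (u \<otimes>\<^bsub>dihedral8\<^esub> v) = (c u + c v) mod 2"
    and u: "u \<in> carrier dihedral8"
  shows "c u = (c (1,0) * fst u + c (0,1) * snd u) mod 2"
proof -
  have a: "c (1,0) \<in> {0,1}" "c (0,1) \<in> {0,1}" "c (0,0) \<in> {0,1}" using c01 by (auto simp: D8_carrier)
  have e0: "c (0,0) = 0" using cm[of "(0,0)" "(0,0)"] a by (auto simp: D8_mult D8_carrier)
  have e2: "c (2,0) = (2 * c (1,0)) mod 2" using cm[of "(1,0)" "(1,0)"] a by (auto simp: D8_mult D8_carrier)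
  have e3: "c (3,0) = (3 * c (1,0)) mod 2" using cm[of "(2,0)" "(1,0)"] a e2 by (auto simp: D8_mult D8_carrier)
  have e11: "c (1,1) = (c (1,0) + c (0,1)) mod 2" using cm[of "(1,0)" "(0,1)"] by (auto simp: D8_mult D8_carrier)
  have e21: "c (2,1) = (2 * c (1,0) + c (0,1)) mod 2" using cm[of "(2,0)" "(0,1)"] e2 a by (auto simp: D8_mult D8_carrier)
  have e31: "c (3,1) = (3 * c (1,0) + c (0,1)) mod 2" using cm[of "(3,0)" "(0,1)"] e3 a by (auto simp: D8_mult D8_carrier)
  have u8: "u = (0,0) \<or> u = (1,0) \<or> u = (2,0) \<or> u = (3,0) \<or> u = (0,1) \<or> u = (1,1) \<or> u = (2,1) \<or> u = (3,1)"
    using u by (simp add: D8_carrier)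
  have "c (1,0) = 0 \<or> c (1,0) = 1" "c (0,1) = 0 \<or> c (0,1) = 1" using a by auto
  then show ?thesis using u8
    by (elim disjE) (simp_all add: e0 e2 e3 e11 e21 e31)
qed

lemma D8_order4:
  assumes u: "u \<in> carrier dihedral8" and n: "u \<otimes>\<^bsub>dihedral8\<^esub> u \<noteq> (0,0)"
  shows "u = (1,0) \<or> u = (3,0)"
  using D8_cases[OF u] n by (elim disjE) (simp_all add: D8_mult)

definition thetaD :: "int \<times> int \<Rightarrow> int \<times> int" where
  "thetaD u = ((fst u + snd u) mod 4, snd u)"

lemma thetaD_iso: "thetaD \<in> iso dihedral8 dihedral8"
proof (rule isoI)
  show "thetaD \<in> hom dihedral8 dihedral8"
  proof (rule homI)
    fix x assume "x \<in> carrier dihedral8" then show "thetaD x \<in> carrier dihedral8"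
      by (simp add: D8_carrier thetaD_def) (elim disjE; simp)
  next
    fix x y assume x: "x \<in> carrier dihedral8" and y: "y \<in> carrier dihedral8"
    from D8_cases[OF x] D8_cases[OF y]
    show "thetaD (x \<otimes>\<^bsub>dihedral8\<^esub> y) = thetaD x \<otimes>\<^bsub>dihedral8\<^esub> thetaD y"
      by (elim disjE) (simp_all add: D8_mult thetaD_def)
  qed
  show "bij_betw thetaD (carrier dihedral8) (carrier dihedral8)"
  proof -
    have "inj_on thetaD (carrier dihedral8)"
    proof (rule inj_onI)
      fix x y assume x: "x \<in> carrier dihedral8" and y: "y \<in> carrier dihedral8" and e: "thetaD x = thetaD y"
      from D8_cases[OF x] D8_cases[OF y] e show "x = y"
        by (elim disjE) (simp_all add: thetaD_def)
    qed
    moreover have "thetaD ` carrier dihedral8 = carrier dihedral8"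
      by (simp add: D8_carrier thetaD_def insert_commute)
    ultimately show ?thesis by (simp add: bij_betw_def)
  qed
qed

lemma Z4_char:
  assumes c01: "\<And>u. u \<in> carrier cyclic4 \<Longrightarrow> c u \<in> {0,1}"
    and cm: "\<And>u v. u \<in> carrier cyclic4 \<Longrightarrow> v \<in> carrier cyclic4 \<Longrightarrow> c ((u + v) mod 4) = (c u + c v) mod 2"
    and u: "u \<in> carrier cyclic4"
  shows "c u = (c 1 * u) mod 2"
proof -
  have a: "c 0 \<in> {0,1}" "c 1 \<in> {0,1}" using c01 by (auto simp: Z4_carrier)
  have e0: "c 0 = 0" using cm[of 0 0] a by (auto simp: Z4_carrier)
  have e2: "c 2 = (2 * c 1) mod 2" using cm[of 1 1] a by (auto simp: Z4_carrier)
  have e3: "c 3 = (3 * c 1) mod 2" using cm[of 2 1] a e2 by (auto simp: Z4_carrier)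
  have "c 1 = 0 \<or> c 1 = 1" using a by auto
  moreover have "u = 0 \<or> u = 1 \<or> u = 2 \<or> u = 3" using u by (simp add: Z4_carrier)
  ultimately show ?thesis by (elim disjE) (simp_all add: e0 e2 e3)
qed


definition Q :: "'a::field set \<Rightarrow> 'a \<Rightarrow> 'a set" where
  "Q F y = {u + v * y | u v. u \<in> F \<and> v \<in> F}"

lemma Q_I: "u \<in> F \<Longrightarrow> v \<in> F \<Longrightarrow> u + v * y \<in> Q F y"
  unfolding Q_def by blast

lemma Q_E: "x \<in> Q F y \<Longrightarrow> (\<And>u v. u \<in> F \<Longrightarrow> v \<in> F \<Longrightarrow> x = u + v * y \<Longrightarrow> P) \<Longrightarrow> P"
  unfolding Q_def by blast

lemma Q_sub: "is_subfield F \<Longrightarrow> F \<subseteq> Q F y"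
proof
  fix x assume "is_subfield F" "x \<in> F"
  then have "x + 0 * y \<in> Q F y" using Q_I[of x F 0 y] sf_0[of F] by blast
  then show "x \<in> Q F y" by simp
qed

lemma Q_y: "is_subfield F \<Longrightarrow> y \<in> Q F y"
proof -
  assume "is_subfield F"
  then have "0 + 1 * y \<in> Q F y" using Q_I[of 0 F 1 y] sf_0[of F] sf_1[of F] by blast
  then show ?thesis by simp
qed

lemma Q_subfield:
  assumes F: "is_subfield F" and y2: "y * y \<in> F"
  shows "is_subfield (Q F y)"
proof -
  have add: "x + z \<in> Q F y" if hx: "x \<in> Q F y" "z \<in> Q F y" for x z
  proof -
    obtain u v where uv: "u \<in> F" "v \<in> F" "x = u + v * y" using hx(1) unfolding Q_def by blast
    obtain u' v' where uv': "u' \<in> F" "v' \<in> F" "z = u' + v' * y" using hx(2) unfolding Q_def by blast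
    have e: "x + z = (u + u') + (v + v') * y" using uv uv' by (simp add: algebra_simps)
    have "(u + u') + (v + v') * y \<in> Q F y" using uv uv' F by (intro Q_I) (simp_all add: sf_add)
    then show ?thesis unfolding e .
  qed
  have mult: "x * z \<in> Q F y" if hx: "x \<in> Q F y" "z \<in> Q F y" for x z
  proof -
    obtain u v where uv: "u \<in> F" "v \<in> F" "x = u + v * y" using hx(1) unfolding Q_def by blast
    obtain u' v' where uv': "u' \<in> F" "v' \<in> F" "z = u' + v' * y" using hx(2) unfolding Q_def by blast
    have e: "x * z = (u * u' + v * v' * (y * y)) + (u * v' + v * u') * y" using uv uv' by (simp add: algebra_simps)
    have "(u * u' + v * v' * (y * y)) + (u * v' + v * u') * y \<in> Q F y" using uv uv' F y2 by (intro Q_I) (simp_all add: sf_add sf_mult)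
    then show ?thesis unfolding e .
  qed
  have neg: "- x \<in> Q F y" if hx: "x \<in> Q F y" for x
  proof -
    obtain u v where uv: "u \<in> F" "v \<in> F" "x = u + v * y" using hx(1) unfolding Q_def by blast
    have e: "- x = (- u) + (- v) * y" using uv by simp
    have "(- u) + (- v) * y \<in> Q F y" using uv F by (intro Q_I) (simp_all add: sf_neg)
    then show ?thesis unfolding e .
  qed
  have inv: "inverse x \<in> Q F y" if hx: "x \<in> Q F y" "x \<noteq> 0" for x
  proof -
    obtain u v where uv: "u \<in> F" "v \<in> F" "x = u + v * y" using hx(1) unfolding Q_def by blast
    define n where "n = u * u - v * v * (y * y)"
    have nF: "n \<in> F" using uv F y2 n_def by (simp add: sf_diff sf_mult)
    show ?thesis
    proof (cases "n = 0")
      case False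
      have "x * (u - v * y) = n" using uv n_def by (simp add: algebra_simps)
      then have "x * ((u - v * y) / n) = 1" using False by (metis divide_self times_divide_eq_right)
      then have "inverse x = (u - v * y) / n" by (metis inverse_unique)
      also have "\<dots> = u / n + (- v / n) * y" by (simp add: diff_divide_distrib)
      finally have e: "inverse x = u / n + (- v / n) * y" .
      have "u / n + (- v / n) * y \<in> Q F y" using uv nF F by (intro Q_I) (simp_all add: sf_divide sf_neg)
      then show ?thesis unfolding e .
    next
      case True
      show ?thesis
      proof (cases "v = 0")
        case True
        then have "x \<in> F" using uv by simp
        then show ?thesis using F Q_sub sf_inverse by blast
      next
        case False
        have uu: "u * u = v * v * (y * y)" using True n_def by simp
        have "(u / v) * (u / v) = (u * u) / (v * v)" by simp
        also have "\<dots> = y * y" unfolding uu using False by simp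
        finally have "y * y = (u / v) * (u / v)" by simp
        then have "y = u / v \<or> y = - (u / v)" using square_eq_iff[of y "u / v"] by simp
        then have "y \<in> F" using uv F by (auto simp: sf_divide sf_neg)
        then have "x \<in> F" using uv F by (simp add: sf_add sf_mult)
        then show ?thesis using F Q_sub sf_inverse by blast
      qed
    qed
  qed
  have "0 \<in> Q F y" "1 \<in> Q F y" using Q_sub[OF F] F sf_0 sf_1 by auto
  then show ?thesis unfolding is_subfield_def by (simp add: add mult neg inv)
qed

lemma sum_three:
  fixes k1 k2 k3 x1 x2 x3 :: "'a::field"
  assumes fin: "finite B" and x: "x1 \<in> B" "x2 \<in> B" "x3 \<in> B" and d: "x1 \<noteq> x2" "x1 \<noteq> x3" "x2 \<noteq> x3"
  shows "(\<Sum>x\<in>B. (if x = x1 then k1 else if x = x2 then k2 else if x = x3 then k3 else 0) * x) = k1 * x1 + k2 * x2 + k3 * x3"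
proof -
  have "(\<Sum>x\<in>B. (if x = x1 then k1 else if x = x2 then k2 else if x = x3 then k3 else 0) * x)
      = (\<Sum>x\<in>{x1,x2,x3}. (if x = x1 then k1 else if x = x2 then k2 else if x = x3 then k3 else 0) * x)"
    using fin x by (intro sum.mono_neutral_right) auto
  also have "\<dots> = k1 * x1 + k2 * x2 + k3 * x3" using d by (simp add: algebra_simps)
  finally show ?thesis .
qed

lemma three_dependent:
  assumes F: "is_subfield F" and x: "x1 \<in> Q F y" "x2 \<in> Q F y" "x3 \<in> Q F y"
  shows "\<exists>k1 k2 k3. k1 \<in> F \<and> k2 \<in> F \<and> k3 \<in> F \<and> (k1 \<noteq> 0 \<or> k2 \<noteq> 0 \<or> k3 \<noteq> 0) \<and> k1 * x1 + k2 * x2 + k3 * x3 = 0"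
proof -
  obtain u1 v1 where 1: "u1 \<in> F" "v1 \<in> F" "x1 = u1 + v1 * y" using x(1) unfolding Q_def by blast
  obtain u2 v2 where 2: "u2 \<in> F" "v2 \<in> F" "x2 = u2 + v2 * y" using x(2) unfolding Q_def by blast
  obtain u3 v3 where 3: "u3 \<in> F" "v3 \<in> F" "x3 = u3 + v3 * y" using x(3) unfolding Q_def by blast
  define c1 where "c1 = u2 * v3 - u3 * v2"
  define c2 where "c2 = u3 * v1 - u1 * v3"
  define c3 where "c3 = u1 * v2 - u2 * v1"
  have cF: "c1 \<in> F" "c2 \<in> F" "c3 \<in> F" using 1 2 3 F by (simp_all add: c1_def c2_def c3_def sf_diff sf_mult)
  have e: "c1 * x1 + c2 * x2 + c3 * x3 = 0" using 1 2 3 by (simp add: c1_def c2_def c3_def algebra_simps)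
  show ?thesis
  proof (cases "c1 \<noteq> 0 \<or> c2 \<noteq> 0 \<or> c3 \<noteq> 0")
    case True then show ?thesis using cF e by blast
  next
    case False
    then have c30: "c3 = 0" by simp
    show ?thesis
    proof (cases "u1 \<noteq> 0")
      case True
      have "u2 * x1 + (- u1) * x2 + 0 * x3 = 0"
        using 1 2 c30 unfolding c3_def by (simp add: algebra_simps)
      then show ?thesis using True 1 2 F by (intro exI[of _ u2] exI[of _ "-u1"] exI[of _ 0]) (simp add: sf_neg sf_0)
    next
      case u: False
      show ?thesis
      proof (cases "v1 \<noteq> 0")
        case True
        have "v2 * x1 + (- v1) * x2 + 0 * x3 = 0"
          using 1 2 c30 u unfolding c3_def by (simp add: algebra_simps)
        then show ?thesis using True 1 2 F by (intro exI[of _ v2] exI[of _ "-v1"] exI[of _ 0]) (simp add: sf_neg sf_0)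
      next
        case False
        then have "1 * x1 + 0 * x2 + 0 * x3 = 0" using u 1 by simp
        then show ?thesis using F by (intro exI[of _ 1] exI[of _ 0] exI[of _ 0]) (simp add: sf_1 sf_0)
      qed
    qed
  qed
qed

lemma deg4_not_Q:
  assumes F: "is_subfield F" and d: "ext_degree F E 4" and EQ: "E \<subseteq> Q F y"
  shows False
proof -
  obtain B where B: "finite B" "card B = 4" "B \<subseteq> E"
    and ind: "\<And>c. (\<forall>x\<in>B. c x \<in> F) \<and> (\<Sum>x\<in>B. c x * x) = 0 \<Longrightarrow> (\<forall>x\<in>B. c x = 0)"
    using d unfolding ext_degree_def by blast
  obtain x1 x2 x3 where x: "x1 \<in> B" "x2 \<in> B" "x3 \<in> B" and dd: "x1 \<noteq> x2" "x1 \<noteq> x3" "x2 \<noteq> x3"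
  proof -
    have "card B \<ge> 3" using B by simp
    then obtain T where "T \<subseteq> B" "card T = 3" by (meson obtain_subset_with_card_n)
    then obtain x1 x2 x3 where "T = {x1, x2, x3}" "x1 \<noteq> x2" "x1 \<noteq> x3" "x2 \<noteq> x3"
      by (auto simp: card_3_iff)
    then show ?thesis using that \<open>T \<subseteq> B\<close> by blast
  qed
  have xQ: "x1 \<in> Q F y" "x2 \<in> Q F y" "x3 \<in> Q F y" using x B EQ by auto
  obtain k1 k2 k3 where k: "k1 \<in> F" "k2 \<in> F" "k3 \<in> F" "k1 \<noteq> 0 \<or> k2 \<noteq> 0 \<or> k3 \<noteq> 0"
    "k1 * x1 + k2 * x2 + k3 * x3 = 0"
    using three_dependent[OF F xQ] by blast
  define c where "c = (\<lambda>x. if x = x1 then k1 else if x = x2 then k2 else if x = x3 then k3 else 0)"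
  have "\<forall>x\<in>B. c x \<in> F" using k sf_0[OF F] by (simp add: c_def)
  moreover have "(\<Sum>x\<in>B. c x * x) = 0" unfolding c_def using sum_three[OF B(1) x dd] k by simp
  ultimately have "\<forall>x\<in>B. c x = 0" using ind by blast
  then show False using x dd k by (auto simp: c_def)
qed


lemma iso_bij: "h \<in> iso G H \<Longrightarrow> bij_betw h (carrier G) (carrier H)"
  by (simp add: iso_def)
lemma iso_hom: "h \<in> iso G H \<Longrightarrow> h \<in> hom G H"
  by (simp add: iso_def)
lemma iso_mult: "h \<in> iso G H \<Longrightarrow> x \<in> carrier G \<Longrightarrow> y \<in> carrier G \<Longrightarrow> h (x \<otimes>\<^bsub>G\<^esub> y) = h x \<otimes>\<^bsub>H\<^esub> h y"
  by (drule iso_hom) (simp add: hom_def)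
lemma iso_carr: "h \<in> iso G H \<Longrightarrow> x \<in> carrier G \<Longrightarrow> h x \<in> carrier H"
  by (drule iso_hom) (rule hom_in_carrier)
lemma iso_inj: "h \<in> iso G H \<Longrightarrow> inj_on h (carrier G)"
  by (drule iso_bij) (simp add: bij_betw_def)
lemma iso_inv_left: "h \<in> iso G H \<Longrightarrow> x \<in> carrier G \<Longrightarrow> inv_into (carrier G) h (h x) = x"
  by (drule iso_bij) (rule bij_betw_inv_into_left)
lemma iso_inv_right: "h \<in> iso G H \<Longrightarrow> y \<in> carrier H \<Longrightarrow> h (inv_into (carrier G) h y) = y"
  by (drule iso_bij) (rule bij_betw_inv_into_right)
lemma iso_inv_carr: "h \<in> iso G H \<Longrightarrow> y \<in> carrier H \<Longrightarrow> inv_into (carrier G) h y \<in> carrier G"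
  by (drule iso_bij) (metis bij_betw_def inv_into_into)
lemma iso_fin: "h \<in> iso G H \<Longrightarrow> finite (carrier H) \<Longrightarrow> finite (carrier G)"
  by (drule iso_bij) (simp add: bij_betw_finite)

lemma Z4_cases: "x \<in> carrier cyclic4 \<Longrightarrow> x = 0 \<or> x = 1 \<or> x = 2 \<or> x = 3"
  by (simp add: Z4_carrier)

lemma Z4_idem: assumes "x \<in> carrier cyclic4" "x \<otimes>\<^bsub>cyclic4\<^esub> x = x" shows "x = 0"
  using Z4_cases[OF assms(1)] assms(2) by (elim disjE) simp_all

lemma D8_idem: assumes "x \<in> carrier dihedral8" "x \<otimes>\<^bsub>dihedral8\<^esub> x = x" shows "x = (0,0)"
  using D8_cases[OF assms(1)] assms(2) by (elim disjE) (simp_all add: D8_mult)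

lemma iso_id_Z4: assumes h: "h \<in> iso (gal_group L F) cyclic4" shows "h id = 0"
  using Z4_idem[OF iso_carr[OF h gal_id] iso_mult[OF h gal_id gal_id, unfolded gal_mult comp_id, symmetric]] .

lemma iso_id_D8: assumes h: "h \<in> iso (gal_group L F) dihedral8" shows "h id = (0,0)"
  using D8_idem[OF iso_carr[OF h gal_id] iso_mult[OF h gal_id gal_id, unfolded gal_mult comp_id, symmetric]] .

lemma neg_ne: assumes "(2::'a::field) \<noteq> 0" "x \<noteq> 0" shows "(x::'a) \<noteq> - x"
proof
  assume e: "x = - x"
  have "x + x = x + (- x)" using arg_cong[OF e, of "\<lambda>t. x + t"] .
  then have "2 * x = 0" by simp
  then show False using assms by simp
qed

lemma gal_sign:
  assumes L: "is_subfield L" and s: "s \<in> carrier (gal_group L F)" and x: "x \<in> L" and xx: "x * x \<in> F"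
  shows "s x = x \<or> s x = - x"
proof -
  have "s (x * x) = x * x" using s xx gal_fix by blast
  then have "s x * s x = x * x" using fh_mult[OF gal_fhom[OF s] x x] by simp
  then show ?thesis by (simp only: square_eq_iff)
qed

definition chi :: "'a::field \<Rightarrow> ('a \<Rightarrow> 'a) \<Rightarrow> int" where
  "chi x s = (if s x = x then 0 else 1)"

lemma chi_01: "chi x s \<in> {0, 1}" by (simp add: chi_def)

lemma chi_mult:
  assumes L: "is_subfield L" and s: "s \<in> carrier (gal_group L F)" and t: "t \<in> carrier (gal_group L F)"
    and x: "x \<in> L" and xx: "x * x \<in> F" and nx: "x \<noteq> - x"
  shows "chi x (s \<circ> t) = (chi x s + chi x t) mod 2"
proof -
  have sn: "s (- x) = - s x" using fh_neg[OF L gal_fhom[OF s] x] .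
  have nx': "- x \<noteq> x" using nx by (rule not_sym)
  have c0: "chi x f = 0" if "f x = x" for f using that by (simp add: chi_def)
  have c1: "chi x f = 1" if "f x = - x" for f using that nx' by (simp add: chi_def)
  have ss: "s (s x) = x" if "s x = - x" using that sn by simp
  consider "s x = x" | "s x = - x" using gal_sign[OF L s x xx] by blast
  then show ?thesis
  proof cases
    case 1
    consider "t x = x" | "t x = - x" using gal_sign[OF L t x xx] by blast
    then show ?thesis
    proof cases
      case 1 then have "(s \<circ> t) x = x" using \<open>s x = x\<close> by simp
      then show ?thesis using c0 \<open>s x = x\<close> 1 by simp
    next
      case 2 then have "(s \<circ> t) x = - x" using \<open>s x = x\<close> sn by simp
      then show ?thesis using c0 c1 \<open>s x = x\<close> 2 by simp
    qed
  next
    case 2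
    consider "t x = x" | "t x = - x" using gal_sign[OF L t x xx] by blast
    then show ?thesis
    proof cases
      case 1 then have "(s \<circ> t) x = - x" using \<open>s x = - x\<close> by simp
      then show ?thesis using c0 c1 \<open>s x = - x\<close> 1 by simp
    next
      case t2: 2
      have "(s \<circ> t) x = s (- x)" using t2 by simp
      also have "\<dots> = - s x" using sn .
      also have "\<dots> = x" using \<open>s x = - x\<close> by simp
      finally have "(s \<circ> t) x = x" .
      then show ?thesis using c0 c1 \<open>s x = - x\<close> t2 by simp
    qed
  qed
qed

locale prop_ctx =
  fixes F Dab Ca :: "'a::field set" and a b \<alpha> \<beta> :: 'a
  assumes F: "is_subfield F"
    and char2: "(2::'a) \<noteq> 0"
    and aF: "a \<in> F" and bF: "b \<in> F"
    and a2: "\<alpha>\<^sup>2 = a" and b2: "\<beta>\<^sup>2 = b"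
    and deg: "ext_degree F (adjoin F {\<alpha>, \<beta>}) 4"
    and galD: "galois F Dab" and ED: "adjoin F {\<alpha>, \<beta>} \<subseteq> Dab"
    and isoD: "gal_group Dab F \<cong> dihedral8"
    and isoDC: "gal_group Dab (adjoin F {\<alpha> * \<beta>}) \<cong> cyclic4"
    and galC: "galois F Ca" and isoC: "gal_group Ca F \<cong> cyclic4"
    and aC: "adjoin F {\<alpha>} \<subseteq> Ca"
begin

lemma D: "is_subfield Dab" and FD: "F \<subseteq> Dab" and ffD: "fixed_field Dab F = F"
  using galois_facts[OF galD] by auto
lemma C: "is_subfield Ca" and FC: "F \<subseteq> Ca" and ffC: "fixed_field Ca F = F"
  using galois_facts[OF galC] by auto

lemma aD: "\<alpha> \<in> Dab" and bD: "\<beta> \<in> Dab" and aCa: "\<alpha> \<in> Ca"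
  using ED aC adjoin_sup by blast+

lemma aa: "\<alpha> * \<alpha> = a" and bb: "\<beta> * \<beta> = b"
  using a2 b2 by (simp_all add: power2_eq_square)

lemma a_notF: "\<alpha> \<notin> F"
proof
  assume "\<alpha> \<in> F"
  have sub: "is_subfield (Q F \<beta>)" by (rule Q_subfield[OF F]) (simp add: bb bF)
  have "F \<union> {\<alpha>, \<beta>} \<subseteq> Q F \<beta>" using Q_sub[OF F, of \<beta>] Q_y[OF F, of \<beta>] \<open>\<alpha> \<in> F\<close> by blast
  then have "adjoin F {\<alpha>, \<beta>} \<subseteq> Q F \<beta>" by (rule adjoin_least[OF sub])
  then show False by (rule deg4_not_Q[OF F deg])
qed

lemma b_notF: "\<beta> \<notin> F"
proof
  assume "\<beta> \<in> F"
  have sub: "is_subfield (Q F \<alpha>)" by (rule Q_subfield[OF F]) (simp add: aa aF)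
  have "F \<union> {\<alpha>, \<beta>} \<subseteq> Q F \<alpha>" using Q_sub[OF F, of \<alpha>] Q_y[OF F, of \<alpha>] \<open>\<beta> \<in> F\<close> by blast
  then have "adjoin F {\<alpha>, \<beta>} \<subseteq> Q F \<alpha>" by (rule adjoin_least[OF sub])
  then show False by (rule deg4_not_Q[OF F deg])
qed

lemma a_ne0: "\<alpha> \<noteq> 0" using a_notF sf_0[OF F] by auto
lemma a_neq: "\<alpha> \<noteq> - \<alpha>" using neg_ne[OF char2 a_ne0] .
lemma a_ne0': "a \<noteq> 0" using a_ne0 aa by auto

lemma ab_notF: "\<alpha> * \<beta> \<notin> F"
proof
  assume ab: "\<alpha> * \<beta> \<in> F"
  have "((\<alpha> * \<beta>) / a) * \<alpha> = ((\<alpha> * \<alpha>) * \<beta>) / a" by (simp add: mult_ac)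
  also have "\<dots> = \<beta>" using aa a_ne0' by simp
  finally have "\<beta> = 0 + ((\<alpha> * \<beta>) / a) * \<alpha>" by simp
  moreover have "0 + ((\<alpha> * \<beta>) / a) * \<alpha> \<in> Q F \<alpha>" using ab aF F by (intro Q_I) (simp_all add: sf_0 sf_divide)
  ultimately have "\<beta> \<in> Q F \<alpha>" by simp
  have sub: "is_subfield (Q F \<alpha>)" by (rule Q_subfield[OF F]) (simp add: aa aF)
  have "F \<union> {\<alpha>, \<beta>} \<subseteq> Q F \<alpha>" using Q_sub[OF F, of \<alpha>] Q_y[OF F, of \<alpha>] \<open>\<beta> \<in> Q F \<alpha>\<close> by blast
  then have "adjoin F {\<alpha>, \<beta>} \<subseteq> Q F \<alpha>" by (rule adjoin_least[OF sub])
  then show False by (rule deg4_not_Q[OF F deg])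
qed

lemma b_ne0: "\<beta> \<noteq> 0" using b_notF sf_0[OF F] by auto
lemma b_neq: "\<beta> \<noteq> - \<beta>" using neg_ne[OF char2 b_ne0] .
lemma ab_neq: "\<alpha> * \<beta> \<noteq> - (\<alpha> * \<beta>)" using neg_ne[OF char2] a_ne0 b_ne0 by simp
lemma abab: "(\<alpha> * \<beta>) * (\<alpha> * \<beta>) \<in> F"
proof -
  have "(\<alpha> * \<beta>) * (\<alpha> * \<beta>) = a * b" using aa bb by (simp add: algebra_simps)
  then show ?thesis using aF bF F sf_mult by metis
qed
lemma abD: "\<alpha> * \<beta> \<in> Dab" using aD bD D sf_mult by blast

lemma QaD: "Q F \<alpha> \<subseteq> Dab"
  using FD aD D unfolding Q_def by (auto intro!: sf_add sf_mult)
lemma QaC: "Q F \<alpha> \<subseteq> Ca"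
  using FC aCa C unfolding Q_def by (auto intro!: sf_add sf_mult)

abbreviation "GC \<equiv> carrier (gal_group Ca F)"
abbreviation "GD \<equiv> carrier (gal_group Dab F)"

definition psi0 where "psi0 = (SOME h. h \<in> iso (gal_group Ca F) cyclic4)"
definition psii where "psii = inv_into GC psi0"

lemma psi0_iso: "psi0 \<in> iso (gal_group Ca F) cyclic4"
proof -
  have "\<exists>h. h \<in> iso (gal_group Ca F) cyclic4" using isoC unfolding is_iso_def by blast
  then show ?thesis unfolding psi0_def by (rule someI_ex)
qed
lemma psii_iso: "psii \<in> iso cyclic4 (gal_group Ca F)"
  unfolding psii_def by (rule iso_inv_gen[OF psi0_iso gal_monoid])
lemma finGC: "finite GC"
  using iso_fin[OF psi0_iso] by (simp add: Z4_carrier)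

lemma psi0_id: "psi0 id = 0" using iso_id_Z4[OF psi0_iso] .
lemma psii_0: "psii 0 = id"
  using iso_inv_left[OF psi0_iso gal_id] psi0_id psii_def by simp
lemma psii_psi0: "t \<in> GC \<Longrightarrow> psii (psi0 t) = t"
  using iso_inv_left[OF psi0_iso] psii_def by simp
lemma psi0_psii: "v \<in> carrier cyclic4 \<Longrightarrow> psi0 (psii v) = v"
  using iso_inv_right[OF psi0_iso] psii_def by simp
lemma psii_carr: "v \<in> carrier cyclic4 \<Longrightarrow> psii v \<in> GC"
  using iso_carr[OF psii_iso] by blast
lemma psii_mult: "u \<in> carrier cyclic4 \<Longrightarrow> v \<in> carrier cyclic4 \<Longrightarrow> psii ((u + v) mod 4) = psii u \<circ> psii v"
  using iso_mult[OF psii_iso] by simp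

definition tau0 where "tau0 = psii 1"
definition rho where "rho = psii 2"

lemma tau0_G: "tau0 \<in> GC" unfolding tau0_def by (rule psii_carr) (simp add: Z4_carrier)
lemma rho_G: "rho \<in> GC" unfolding rho_def by (rule psii_carr) (simp add: Z4_carrier)
lemma rho_tau: "rho = tau0 \<circ> tau0"
  unfolding rho_def tau0_def using psii_mult[of 1 1] by (simp add: Z4_carrier)
lemma rho_rho: "rho \<circ> rho = id"
  unfolding rho_def using psii_mult[of 2 2] psii_0 by (simp add: Z4_carrier)
lemma psii_3: "psii 3 = tau0 \<circ> rho"
  unfolding rho_def tau0_def using psii_mult[of 1 2] by (simp add: Z4_carrier)
lemma GC_cases: "t \<in> GC \<Longrightarrow> t = id \<or> t = tau0 \<or> t = rho \<or> t = tau0 \<circ> rho"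
proof -
  assume t: "t \<in> GC"
  have "psi0 t \<in> {0,1,2,3}" using iso_carr[OF psi0_iso t] Z4_carrier by simp
  then show ?thesis using psii_psi0[OF t] psii_0 psii_3 tau0_def rho_def by auto
qed
lemma rho_ne_id: "rho \<noteq> id"
proof
  assume "rho = id"
  then have "psi0 rho = 0" using psi0_id by simp
  moreover have "psi0 rho = 2" unfolding rho_def by (rule psi0_psii) (simp add: Z4_carrier)
  ultimately show False by simp
qed

lemma fixC: "x \<in> Ca \<Longrightarrow> tau0 x = x \<Longrightarrow> x \<in> F"
proof -
  assume x: "x \<in> Ca" and tx: "tau0 x = x"
  have "\<forall>t\<in>GC. t x = x"
  proof
    fix t assume "t \<in> GC"
    from GC_cases[OF this] show "t x = x" using tx rho_tau by auto
  qed
  then have "x \<in> fixed_field Ca F" unfolding fixed_field_def using x by blast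
  then show ?thesis using ffC by simp
qed

lemma tau0_a: "tau0 \<alpha> = - \<alpha>"
proof -
  have aaF: "\<alpha> * \<alpha> \<in> F" using aa aF by simp
  from gal_sign[OF C tau0_G aCa aaF] show ?thesis using fixC[OF aCa] a_notF by blast
qed

lemma tau0_neg: "x \<in> Ca \<Longrightarrow> tau0 (- x) = - tau0 x"
  using fh_neg[OF C gal_fhom[OF tau0_G]] by blast

lemma rho_a: "rho \<alpha> = \<alpha>" using rho_tau tau0_a tau0_neg aCa by simp

lemma M_Q: assumes m: "m \<in> Ca" and rm: "rho m = m" shows "m \<in> Q F \<alpha>"
proof -
  have ht: "fhom Ca tau0" and it: "inj_on tau0 Ca" using tau0_G gal_fhom gal_inj by auto
  have tm: "tau0 m \<in> Ca" using tau0_G gal_maps m by blast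
  have ttm: "tau0 (tau0 m) = m" using rm rho_tau by simp
  define m1 where "m1 = (m + tau0 m) / 2"
  define m2 where "m2 = (m - tau0 m) / 2"
  have m1C: "m1 \<in> Ca" and m2C: "m2 \<in> Ca" using m tm C by (simp_all add: m1_def m2_def sf_closed)
  have t2: "tau0 2 = 2" using fh_2[OF C ht it] .
  have "tau0 m1 = (tau0 m + m) / 2"
    unfolding m1_def using m tm C ttm t2 by (simp add: fh_divide[OF C ht it] fh_add[OF ht] sf_closed)
  then have "tau0 m1 = m1" by (simp add: m1_def add.commute)
  then have m1F: "m1 \<in> F" using fixC m1C by blast
  have "tau0 m2 = (tau0 m - m) / 2"
    unfolding m2_def using m tm C ttm t2 by (simp add: fh_divide[OF C ht it] fh_diff[OF C ht] sf_closed)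
  then have tm2: "tau0 m2 = - m2" by (simp add: m2_def minus_divide_left)
  have "tau0 (m2 / \<alpha>) = tau0 m2 / tau0 \<alpha>" using fh_divide[OF C ht it m2C aCa] .
  then have "tau0 (m2 / \<alpha>) = m2 / \<alpha>" using tm2 tau0_a by simp
  then have qF: "m2 / \<alpha> \<in> F" using fixC C m2C aCa sf_divide by blast
  have "m1 + m2 = m" using char2 unfolding m1_def m2_def by (simp add: add_divide_distrib[symmetric])
  then have e: "m = m1 + (m2 / \<alpha>) * \<alpha>" using a_ne0 by simp
  have "m1 + (m2 / \<alpha>) * \<alpha> \<in> Q F \<alpha>" by (rule Q_I[OF m1F qF])
  then show ?thesis unfolding e[symmetric] .
qed

definition y0 where "y0 = (SOME y. y \<in> Ca \<and> rho y \<noteq> y)"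
definition \<gamma> where "\<gamma> = y0 - rho y0"

lemma y0: "y0 \<in> Ca \<and> rho y0 \<noteq> y0"
proof -
  have "\<exists>y. rho y \<noteq> y" using rho_ne_id by (auto simp: fun_eq_iff)
  then have "\<exists>y. y \<in> Ca \<and> rho y \<noteq> y" using gal_out[OF rho_G] by blast
  then show ?thesis unfolding y0_def by (rule someI_ex)
qed

lemma rhoC: "x \<in> Ca \<Longrightarrow> rho x \<in> Ca" using gal_maps[OF rho_G] .
lemma rho_fh: "fhom Ca rho" using gal_fhom[OF rho_G] .
lemma rho_inj: "inj_on rho Ca" using gal_inj[OF rho_G] .
lemma rho_rho_x: "rho (rho x) = x" using fun_cong[OF rho_rho, of x] by simp

lemma gC: "\<gamma> \<in> Ca" using y0 C rhoC by (simp add: \<gamma>_def sf_diff)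
lemma g_ne0: "\<gamma> \<noteq> 0"
proof
  assume "\<gamma> = 0"
  then have "rho y0 = y0" by (simp add: \<gamma>_def)
  then show False using y0 by simp
qed
lemma rho_g: "rho \<gamma> = - \<gamma>"
  using y0 rhoC fh_diff[OF C rho_fh] by (simp add: \<gamma>_def rho_rho_x)
lemma gg_Q: "\<gamma> * \<gamma> \<in> Q F \<alpha>"
proof (rule M_Q)
  show "\<gamma> * \<gamma> \<in> Ca" using gC C sf_mult by blast
  show "rho (\<gamma> * \<gamma>) = \<gamma> * \<gamma>" using fh_mult[OF rho_fh gC gC] rho_g by simp
qed
lemma ggD: "\<gamma> * \<gamma> \<in> Dab" using gg_Q QaD by blast

lemma Ca_decomp: assumes z: "z \<in> Ca" shows "\<exists>m0 m1. m0 \<in> Q F \<alpha> \<and> m1 \<in> Q F \<alpha> \<and> z = m0 + m1 * \<gamma>"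
proof -
  have rz: "rho z \<in> Ca" using rhoC z .
  have r2: "rho 2 = 2" using fh_2[OF C rho_fh rho_inj] .
  define z1 where "z1 = (z + rho z) / 2"
  define z2 where "z2 = (z - rho z) / 2"
  have z1C: "z1 \<in> Ca" and z2C: "z2 \<in> Ca" using z rz C by (simp_all add: z1_def z2_def sf_closed)
  have "rho z1 = (rho z + z) / 2"
    unfolding z1_def using z rz C r2 by (simp add: fh_divide[OF C rho_fh rho_inj] fh_add[OF rho_fh] sf_closed rho_rho_x)
  then have "rho z1 = z1" by (simp add: z1_def add.commute)
  then have q1: "z1 \<in> Q F \<alpha>" using M_Q z1C by blast
  have "rho z2 = (rho z - z) / 2"
    unfolding z2_def using z rz C r2 by (simp add: fh_divide[OF C rho_fh rho_inj] fh_diff[OF C rho_fh] sf_closed rho_rho_x)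
  then have rz2: "rho z2 = - z2" by (simp add: z2_def minus_divide_left)
  have "rho (z2 / \<gamma>) = rho z2 / rho \<gamma>" using fh_divide[OF C rho_fh rho_inj z2C gC] .
  then have "rho (z2 / \<gamma>) = z2 / \<gamma>" using rz2 rho_g by simp
  then have q2: "z2 / \<gamma> \<in> Q F \<alpha>" using M_Q C z2C gC sf_divide by blast
  have "z1 + z2 = z" using char2 unfolding z1_def z2_def by (simp add: add_divide_distrib[symmetric])
  then have "z = z1 + (z2 / \<gamma>) * \<gamma>" using g_ne0 by simp
  then show ?thesis using q1 q2 by blast
qed

definition phi0 where "phi0 = (SOME h. h \<in> iso (gal_group Dab F) dihedral8)"
definition phii where "phii = inv_into GD phi0"

lemma phi0_iso: "phi0 \<in> iso (gal_group Dab F) dihedral8"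
proof -
  have "\<exists>h. h \<in> iso (gal_group Dab F) dihedral8" using isoD unfolding is_iso_def by blast
  then show ?thesis unfolding phi0_def by (rule someI_ex)
qed
lemma phii_iso: "phii \<in> iso dihedral8 (gal_group Dab F)"
  unfolding phii_def by (rule iso_inv_gen[OF phi0_iso gal_monoid])
lemma finGD: "finite GD"
  using iso_fin[OF phi0_iso] by (simp add: D8_carrier)
lemma phii_phi0: "s \<in> GD \<Longrightarrow> phii (phi0 s) = s"
  using iso_inv_left[OF phi0_iso] phii_def by simp

lemma g_notD: "\<gamma> \<notin> Dab"
proof
  assume gD: "\<gamma> \<in> Dab"
  have CD: "Ca \<subseteq> Dab"
  proof
    fix z assume "z \<in> Ca"
    then obtain m0 m1 where "m0 \<in> Q F \<alpha>" "m1 \<in> Q F \<alpha>" "z = m0 + m1 * \<gamma>" using Ca_decomp by blast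
    then show "z \<in> Dab" using QaD gD D by (auto intro!: sf_add sf_mult)
  qed
  define R where "R = (\<lambda>s. restr s Ca)"
  have Rc: "R s \<in> GC" if "s \<in> GD" for s
    unfolding R_def using restrict_gal(1)[OF galC finGC D CD that] .
  have Rm: "s y \<in> Ca" if "s \<in> GD" "y \<in> Ca" for s y
    using restrict_gal(2)[OF galC finGC D CD that(1)] that(2) .
  have Rhom: "R \<in> hom (gal_group Dab F) (gal_group Ca F)"
  proof (rule homI)
    fix x assume "x \<in> GD" then show "R x \<in> GC" using Rc by blast
  next
    fix x y assume x: "x \<in> GD" and y: "y \<in> GD"
    show "R (x \<otimes>\<^bsub>gal_group Dab F\<^esub> y) = R x \<otimes>\<^bsub>gal_group Ca F\<^esub> R y"
      unfolding R_def restr_def using Rm[OF y] by (auto simp: fun_eq_iff)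
  qed
  define h where "h = psi0 \<circ> R \<circ> phii"
  have "h \<in> hom dihedral8 cyclic4"
    unfolding h_def
    using hom_compose[OF hom_compose[OF iso_imp_homomorphism[OF phii_iso] Rhom] iso_imp_homomorphism[OF psi0_iso]]
    by (simp add: comp_assoc)
  have "s \<alpha> = \<alpha>" if s: "s \<in> GD" for s
  proof -
    have "h (phi0 s) \<in> {0,2}"
      using hom_D8_Z4_even[OF \<open>h \<in> hom dihedral8 cyclic4\<close> iso_carr[OF phi0_iso s]] .
    then have "psi0 (R s) \<in> {0,2}" unfolding h_def using phii_phi0[OF s] by simp
    then have "R s = psii 0 \<or> R s = psii 2" using psii_psi0[OF Rc[OF s]] by auto
    then have "R s = id \<or> R s = rho" using psii_0 rho_def by simp
    then have "R s \<alpha> = \<alpha>" using rho_a by auto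
    then show ?thesis unfolding R_def restr_def using aCa by simp
  qed
  then have "\<alpha> \<in> fixed_field Dab F" unfolding fixed_field_def using aD by blast
  then show False using ffD a_notF by simp
qed

end


context prop_ctx begin

definition K where "K = adjoin Dab Ca"

lemma Qg_sf: "is_subfield (Q Dab \<gamma>)" using Q_subfield[OF D ggD] .

lemma C_Qg: "Ca \<subseteq> Q Dab \<gamma>"
proof
  fix z assume "z \<in> Ca"
  then obtain m0 m1 where m: "m0 \<in> Q F \<alpha>" "m1 \<in> Q F \<alpha>" "z = m0 + m1 * \<gamma>" using Ca_decomp by blast
  then show "z \<in> Q Dab \<gamma>" using QaD Q_I[of m0 Dab m1 \<gamma>] by blast
qed

lemma K_sf: "is_subfield K" unfolding K_def by (rule adjoin_subfield)
lemma DK: "Dab \<subseteq> K" and CK: "Ca \<subseteq> K" unfolding K_def using adjoin_sup by blast+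
lemma FK: "F \<subseteq> K" using FD DK by blast
lemma gK: "\<gamma> \<in> K" using gC CK by blast

lemma K_eq: "K = Q Dab \<gamma>"
proof
  show "K \<subseteq> Q Dab \<gamma>" unfolding K_def
    by (rule adjoin_least[OF Qg_sf]) (use Q_sub[OF D] C_Qg in blast)
  show "Q Dab \<gamma> \<subseteq> K"
  proof
    fix x assume "x \<in> Q Dab \<gamma>"
    then obtain u v where "u \<in> Dab" "v \<in> Dab" "x = u + v * \<gamma>" unfolding Q_def by blast
    then show "x \<in> K" using DK gK K_sf by (auto intro!: sf_add sf_mult)
  qed
qed

lemma K_dec: "x \<in> K \<Longrightarrow> \<exists>u v. u \<in> Dab \<and> v \<in> Dab \<and> x = u + v * \<gamma>"
  using K_eq unfolding Q_def by blast

lemma dec_unique: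
  assumes u: "u \<in> Dab" "v \<in> Dab" "u' \<in> Dab" "v' \<in> Dab" and e: "u + v * \<gamma> = u' + v' * \<gamma>"
  shows "u = u' \<and> v = v'"
proof (cases "v = v'")
  case True then show ?thesis using e by simp
next
  case False
  have "(v - v') * \<gamma> = u' - u" using e by (simp add: algebra_simps)
  then have "\<gamma> = (u' - u) / (v - v')" using False by (simp add: field_simps)
  then have "\<gamma> \<in> Dab" using u D by (simp add: sf_closed)
  then show ?thesis using g_notD by blast
qed

definition cp where "cp x = (SOME p. fst p \<in> Dab \<and> snd p \<in> Dab \<and> x = fst p + snd p * \<gamma>)"

lemma cp_eq: assumes "u \<in> Dab" "v \<in> Dab" shows "cp (u + v * \<gamma>) = (u, v)"
proof -
  have ex: "\<exists>p. fst p \<in> Dab \<and> snd p \<in> Dab \<and> u + v * \<gamma> = fst p + snd p * \<gamma>" using assms by (intro exI[of _ "(u,v)"]) simp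
  have "fst (cp (u + v * \<gamma>)) \<in> Dab \<and> snd (cp (u + v * \<gamma>)) \<in> Dab \<and> u + v * \<gamma> = fst (cp (u + v * \<gamma>)) + snd (cp (u + v * \<gamma>)) * \<gamma>"
    unfolding cp_def using someI_ex[OF ex] .
  then show ?thesis using dec_unique assms by (metis prod.collapse)
qed

definition ext where
  "ext s1 t = (\<lambda>x. if x \<in> K then s1 (fst (cp x)) + s1 (snd (cp x)) * t \<gamma> else x)"

lemma ext_val: "u \<in> Dab \<Longrightarrow> v \<in> Dab \<Longrightarrow> ext s1 t (u + v * \<gamma>) = s1 u + s1 v * t \<gamma>"
proof -
  assume uv: "u \<in> Dab" "v \<in> Dab"
  then have "u + v * \<gamma> \<in> K" using K_eq Q_I by blast
  then show ?thesis unfolding ext_def using cp_eq[OF uv] by simp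
qed

lemma ext_gal:
  assumes s1: "s1 \<in> GD" and t: "t \<in> GC" and st: "s1 \<alpha> = t \<alpha>"
  shows "ext s1 t \<in> carrier (gal_group K F)" "\<And>x. x \<in> Dab \<Longrightarrow> ext s1 t x = s1 x" "\<And>x. x \<in> Ca \<Longrightarrow> ext s1 t x = t x"
proof -
  have hs: "fhom Dab s1" and is1: "inj_on s1 Dab" and ms: "\<And>x. x \<in> Dab \<Longrightarrow> s1 x \<in> Dab"
    using s1 gal_fhom gal_inj gal_maps by auto
  have ht: "fhom Ca t" and it: "inj_on t Ca" and mt: "\<And>x. x \<in> Ca \<Longrightarrow> t x \<in> Ca"
    using t gal_fhom gal_inj gal_maps by auto
  have agree: "s1 x = t x" if xq: "x \<in> Q F \<alpha>" for x
  proof -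
    obtain u v where uv: "u \<in> F" "v \<in> F" "x = u + v * \<alpha>" using xq unfolding Q_def by blast
    have uvD: "u \<in> Dab" "v \<in> Dab" and uvC: "u \<in> Ca" "v \<in> Ca" using uv FD FC by auto
    have "s1 x = s1 u + s1 v * s1 \<alpha>" using uv uvD aD D by (simp add: fh_add[OF hs] fh_mult[OF hs] sf_mult)
    also have "\<dots> = u + v * t \<alpha>" using uv s1 st gal_fix by metis
    also have "\<dots> = t u + t v * t \<alpha>" using uv t gal_fix by metis
    also have "\<dots> = t x" using uv uvC aCa C by (simp add: fh_add[OF ht] fh_mult[OF ht] sf_mult)
    finally show ?thesis .
  qed
  have tgK: "t \<gamma> \<in> K" using mt gC CK by blast
  have tgg: "t \<gamma> * t \<gamma> = s1 (\<gamma> * \<gamma>)" using agree[OF gg_Q] fh_mult[OF ht gC gC] by simp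
  define s where "s = ext s1 t"
  have s_val: "s (u + v * \<gamma>) = s1 u + s1 v * t \<gamma>" if "u \<in> Dab" "v \<in> Dab" for u v
    unfolding s_def using ext_val that .
  have s1_0: "s1 0 = 0" using fh_0[OF D hs] .
  have s1_1: "s1 1 = 1" using fh_1[OF D hs is1] .
  have onD: "s x = s1 x" if "x \<in> Dab" for x
    using s_val[OF that sf_0[OF D]] s1_0 by simp
  have onC: "s z = t z" if z: "z \<in> Ca" for z
  proof -
    obtain m0 m1 where m: "m0 \<in> Q F \<alpha>" "m1 \<in> Q F \<alpha>" "z = m0 + m1 * \<gamma>" using Ca_decomp[OF z] by blast
    have mD: "m0 \<in> Dab" "m1 \<in> Dab" and mC: "m0 \<in> Ca" "m1 \<in> Ca" using m QaD QaC by auto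
    have "s z = s1 m0 + s1 m1 * t \<gamma>" using s_val mD m by simp
    also have "\<dots> = t m0 + t m1 * t \<gamma>" using agree m by simp
    also have "\<dots> = t z" using m mC gC C by (simp add: fh_add[OF ht] fh_mult[OF ht] sf_mult)
    finally show ?thesis .
  qed
  have hK: "fhom K s"
    unfolding fhom_def
  proof (intro ballI conjI)
    fix x y assume x: "x \<in> K" and y: "y \<in> K"
    obtain u v where uv: "u \<in> Dab" "v \<in> Dab" "x = u + v * \<gamma>" using K_dec[OF x] by blast
    obtain u' v' where uv': "u' \<in> Dab" "v' \<in> Dab" "y = u' + v' * \<gamma>" using K_dec[OF y] by blast
    have ex: "x + y = (u + u') + (v + v') * \<gamma>" using uv uv' by (simp add: algebra_simps)
    have "s (x + y) = s ((u + u') + (v + v') * \<gamma>)" using ex by (rule arg_cong)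
    also have "\<dots> = s1 (u + u') + s1 (v + v') * t \<gamma>" by (rule s_val) (use uv uv' D in \<open>simp_all add: sf_add\<close>)
    also have "\<dots> = s x + s y" using s_val uv uv' by (simp add: fh_add[OF hs] algebra_simps)
    finally show "s (x + y) = s x + s y" .
    have exy: "x * y = (u * u' + v * v' * (\<gamma> * \<gamma>)) + (u * v' + v * u') * \<gamma>" using uv uv' by (simp add: algebra_simps)
    have "s (x * y) = s ((u * u' + v * v' * (\<gamma> * \<gamma>)) + (u * v' + v * u') * \<gamma>)" using exy by (rule arg_cong)
    also have "\<dots> = s1 (u * u' + v * v' * (\<gamma> * \<gamma>)) + s1 (u * v' + v * u') * t \<gamma>"
      by (rule s_val) (use uv uv' D ggD in \<open>simp_all add: sf_add sf_mult\<close>)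
    also have "\<dots> = s1 u * s1 u' + s1 v * s1 v' * s1 (\<gamma> * \<gamma>) + (s1 u * s1 v' + s1 v * s1 u') * t \<gamma>"
      using uv uv' D ggD by (simp add: fh_add[OF hs] fh_mult[OF hs] sf_add sf_mult)
    also have "\<dots> = (s1 u + s1 v * t \<gamma>) * (s1 u' + s1 v' * t \<gamma>)"
      unfolding tgg[symmetric] by (simp add: algebra_simps)
    also have "\<dots> = s x * s y" using s_val uv uv' by simp
    finally show "s (x * y) = s x * s y" .
  qed
  have s_1: "s 1 = 1" using onD[OF sf_1[OF D]] s1_1 by simp
  have iK: "inj_on s K" using fh_inj[OF K_sf hK] s_1 by simp
  have mK: "s x \<in> K" if xK: "x \<in> K" for x
  proof -
    obtain u v where uv: "u \<in> Dab" "v \<in> Dab" "x = u + v * \<gamma>" using K_dec[OF xK] by blast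
    then show ?thesis using s_val ms DK tgK K_sf by (auto intro!: sf_add sf_mult)
  qed
  have sK: "x \<in> s ` K" if xK: "x \<in> K" for x
  proof -
    obtain u v where uv: "u \<in> Dab" "v \<in> Dab" "x = u + v * \<gamma>" using K_dec[OF xK] by blast
    have bs: "bij_betw s1 Dab Dab" using s1 by (simp add: gal_carrier)
    have bt: "bij_betw t Ca Ca" using t by (simp add: gal_carrier)
    obtain u' where u': "u' \<in> Dab" "s1 u' = u" using bs uv by (metis bij_betw_iff_bijections)
    obtain v' where v': "v' \<in> Dab" "s1 v' = v" using bs uv by (metis bij_betw_iff_bijections)
    obtain g' where g': "g' \<in> Ca" "t g' = \<gamma>" using bt gC by (metis bij_betw_iff_bijections)
    have inK: "u' + v' * g' \<in> K" using u' v' g' DK CK K_sf by (auto intro!: sf_add sf_mult)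
    have k: "u' \<in> K" "v' \<in> K" "g' \<in> K" using u' v' g' DK CK by auto
    have "s (u' + v' * g') = s u' + s v' * s g'"
      using fh_add[OF hK k(1) sf_mult[OF K_sf k(2) k(3)]] fh_mult[OF hK k(2) k(3)] by simp
    also have "\<dots> = x" using onD onC u' v' g' uv by simp
    finally show ?thesis using inK by (metis image_eqI)
  qed
  have "bij_betw s K K" unfolding bij_betw_def using iK mK sK by blast
  moreover have "\<forall>x\<in>F. s x = x" using onD FD s1 gal_fix by (metis subsetD)
  moreover have "\<forall>x. x \<notin> K \<longrightarrow> s x = x" unfolding s_def ext_def by simp
  ultimately show "ext s1 t \<in> carrier (gal_group K F)" unfolding gal_carrier s_def[symmetric] using hK by blast
  show "\<And>x. x \<in> Dab \<Longrightarrow> ext s1 t x = s1 x" using onD s_def by simp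
  show "\<And>x. x \<in> Ca \<Longrightarrow> ext s1 t x = t x" using onC s_def by simp
qed

end


lemma chi0: "f x = x \<Longrightarrow> chi x f = 0" by (simp add: chi_def)
lemma chi1: "f x = - x \<Longrightarrow> x \<noteq> - x \<Longrightarrow> chi x f = 1"
proof -
  assume "f x = - x" "x \<noteq> - x"
  then have "f x \<noteq> x" by (metis)
  then show ?thesis by (simp add: chi_def)
qed

context prop_ctx begin

lemma aaF: "\<alpha> * \<alpha> \<in> F" using aa aF by simp
lemma bbF: "\<beta> * \<beta> \<in> F" using bb bF by simp

lemma phii_carr: "u \<in> carrier dihedral8 \<Longrightarrow> phii u \<in> GD" using iso_carr[OF phii_iso] .
lemma phii_mult: "u \<in> carrier dihedral8 \<Longrightarrow> v \<in> carrier dihedral8 \<Longrightarrow> phii (u \<otimes>\<^bsub>dihedral8\<^esub> v) = phii u \<circ> phii v"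
  using iso_mult[OF phii_iso] by simp

lemma chiD_form:
  assumes x: "x \<in> Dab" "x * x \<in> F" "x \<noteq> - x" and u: "u \<in> carrier dihedral8"
  shows "chi x (phii u) = (chi x (phii (1,0)) * fst u + chi x (phii (0,1)) * snd u) mod 2"
proof (rule D8_char[where c = "\<lambda>u. chi x (phii u)", OF _ _ u])
  show "\<And>u. u \<in> carrier dihedral8 \<Longrightarrow> chi x (phii u) \<in> {0, 1}" by (rule chi_01)
  fix u v assume uv: "u \<in> carrier dihedral8" "v \<in> carrier dihedral8"
  show "chi x (phii (u \<otimes>\<^bsub>dihedral8\<^esub> v)) = (chi x (phii u) + chi x (phii v)) mod 2"
    unfolding phii_mult[OF uv] by (rule chi_mult[OF D phii_carr[OF uv(1)] phii_carr[OF uv(2)] x])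
qed

lemma chi_prod:
  assumes s: "s \<in> GD"
  shows "chi (\<alpha> * \<beta>) s = (chi \<alpha> s + chi \<beta> s) mod 2"
proof -
  have h: "fhom Dab s" using gal_fhom[OF s] .
  have sab: "s (\<alpha> * \<beta>) = s \<alpha> * s \<beta>" using fh_mult[OF h aD bD] .
  consider "s \<alpha> = \<alpha>" | "s \<alpha> = - \<alpha>" using gal_sign[OF D s aD aaF] by blast
  then show ?thesis
  proof cases
    case 1
    consider "s \<beta> = \<beta>" | "s \<beta> = - \<beta>" using gal_sign[OF D s bD bbF] by blast
    then show ?thesis
    proof cases
      case 2
      have "s (\<alpha> * \<beta>) = - (\<alpha> * \<beta>)" using sab 1 2 by simp
      then show ?thesis using chi0[of s \<alpha>, OF 1] chi1[of s \<beta>, OF 2 b_neq] chi1[OF _ ab_neq] by simp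
    next
      case b: 1
      have "s (\<alpha> * \<beta>) = \<alpha> * \<beta>" using sab 1 b by simp
      then show ?thesis using chi0[of s \<alpha>, OF 1] chi0[of s \<beta>, OF b] chi0 by simp
    qed
  next
    case 2
    consider "s \<beta> = \<beta>" | "s \<beta> = - \<beta>" using gal_sign[OF D s bD bbF] by blast
    then show ?thesis
    proof cases
      case 1
      have "s (\<alpha> * \<beta>) = - (\<alpha> * \<beta>)" using sab 1 2 by simp
      then show ?thesis using chi1[of s \<alpha>, OF 2 a_neq] chi0[of s \<beta>, OF 1] chi1[OF _ ab_neq] by simp
    next
      case b: 2
      have "s (\<alpha> * \<beta>) = \<alpha> * \<beta>" using sab 2 b by simp
      then show ?thesis using chi1[of s \<alpha>, OF 2 a_neq] chi1[of s \<beta>, OF b b_neq] chi0 by simp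
    qed
  qed
qed

lemma nontriv:
  assumes x: "x \<in> Dab" "x \<notin> F"
  shows "\<exists>u\<in>carrier dihedral8. chi x (phii u) = 1"
proof -
  have "\<exists>s\<in>GD. s x \<noteq> x"
  proof (rule ccontr)
    assume "\<not> ?thesis"
    then have "x \<in> fixed_field Dab F" unfolding fixed_field_def using x by blast
    then show False using ffD x by simp
  qed
  then obtain s where s: "s \<in> GD" "s x \<noteq> x" by blast
  have "chi x (phii (phi0 s)) = 1" using phii_phi0[OF s(1)] s(2) by (simp add: chi_def)
  then show ?thesis using iso_carr[OF phi0_iso s(1)] by blast
qed

definition psiq where "psiq = (SOME h. h \<in> iso (gal_group Dab (adjoin F {\<alpha> * \<beta>})) cyclic4)"
definition omg where "omg = inv_into (carrier (gal_group Dab (adjoin F {\<alpha> * \<beta>}))) psiq 1"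

lemma omega:
  shows "omg \<in> GD" "omg (\<alpha> * \<beta>) = \<alpha> * \<beta>" "phi0 omg = (1,0) \<or> phi0 omg = (3,0)"
proof -
  define G' where "G' = gal_group Dab (adjoin F {\<alpha> * \<beta>})"
  have psq: "psiq \<in> iso G' cyclic4"
  proof -
    have "\<exists>h. h \<in> iso G' cyclic4" using isoDC unfolding is_iso_def G'_def by blast
    then show ?thesis unfolding psiq_def G'_def by (rule someI_ex)
  qed
  define pi' where "pi' = inv_into (carrier G') psiq"
  have pi: "pi' \<in> iso cyclic4 G'" unfolding pi'_def G'_def by (rule iso_inv_gen[OF psq[unfolded G'_def] gal_monoid])
  have w: "omg = pi' 1" unfolding omg_def pi'_def G'_def ..
  have c1: "(1::int) \<in> carrier cyclic4" and c2: "(2::int) \<in> carrier cyclic4" by (simp_all add: Z4_carrier)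
  have wG': "omg \<in> carrier G'" using iso_carr[OF pi c1] w by simp
  have ww: "omg \<circ> omg = pi' 2"
    using iso_mult[OF pi c1 c1] w unfolding G'_def by simp
  have "psiq (omg \<circ> omg) = 2" unfolding ww pi'_def using iso_inv_right[OF psq c2] .
  moreover have "psiq id = 0" using iso_id_Z4[OF psq[unfolded G'_def]] .
  ultimately have wwid: "omg \<circ> omg \<noteq> id" by auto
  have FA: "F \<subseteq> adjoin F {\<alpha> * \<beta>}" and abA: "\<alpha> * \<beta> \<in> adjoin F {\<alpha> * \<beta>}" using adjoin_sup by blast+
  show wD: "omg \<in> GD" using wG' FA unfolding G'_def gal_carrier by blast
  show "omg (\<alpha> * \<beta>) = \<alpha> * \<beta>" using wG' abA unfolding G'_def gal_carrier by blast
  have wwD: "omg \<circ> omg \<in> GD" using gal_comp[OF wD wD] .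
  have "phi0 (omg \<circ> omg) = phi0 omg \<otimes>\<^bsub>dihedral8\<^esub> phi0 omg" using iso_mult[OF phi0_iso wD wD] by simp
  moreover have "phi0 (omg \<circ> omg) \<noteq> (0,0)"
  proof
    assume "phi0 (omg \<circ> omg) = (0,0)"
    then have "phi0 (omg \<circ> omg) = phi0 id" using iso_id_D8[OF phi0_iso] by simp
    then have "omg \<circ> omg = id" using iso_inj[OF phi0_iso] wwD gal_id by (metis inj_onD)
    then show False using wwid by simp
  qed
  ultimately show "phi0 omg = (1,0) \<or> phi0 omg = (3,0)" using D8_order4[OF iso_carr[OF phi0_iso wD]] by simp
qed

lemma phi_exists: "\<exists>phi \<in> iso (gal_group Dab F) dihedral8. \<forall>s\<in>GD. lambdaD (phi s) = chi \<alpha> s"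
proof -
  have c10: "(1,0) \<in> carrier dihedral8" and c01: "(0,1) \<in> carrier dihedral8" by (simp_all add: D8_carrier)
  define p where "p = chi \<alpha> (phii (1,0))"
  define q where "q = chi \<alpha> (phii (0,1))"
  define p' where "p' = chi \<beta> (phii (1,0))"
  define q' where "q' = chi \<beta> (phii (0,1))"
  define r where "r = chi (\<alpha> * \<beta>) (phii (1,0))"
  define r' where "r' = chi (\<alpha> * \<beta>) (phii (0,1))"
  have v: "p \<in> {0,1}" "q \<in> {0,1}" "p' \<in> {0,1}" "q' \<in> {0,1}" "r \<in> {0,1}" "r' \<in> {0,1}"
    unfolding p_def q_def p'_def q'_def r_def r'_def by (rule chi_01)+
  have rr: "r = (p + p') mod 2" unfolding r_def p_def p'_def by (rule chi_prod[OF phii_carr[OF c10]])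
  have rr': "r' = (q + q') mod 2" unfolding r'_def q_def q'_def by (rule chi_prod[OF phii_carr[OF c01]])
  have fa: "chi \<alpha> (phii u) = (p * fst u + q * snd u) mod 2" if "u \<in> carrier dihedral8" for u
    unfolding p_def q_def by (rule chiD_form[OF aD aaF a_neq that])
  have fb: "chi \<beta> (phii u) = (p' * fst u + q' * snd u) mod 2" if "u \<in> carrier dihedral8" for u
    unfolding p'_def q'_def by (rule chiD_form[OF bD bbF b_neq that])
  have fab: "chi (\<alpha> * \<beta>) (phii u) = (r * fst u + r' * snd u) mod 2" if "u \<in> carrier dihedral8" for u
    unfolding r_def r'_def by (rule chiD_form[OF abD abab ab_neq that])
  have na: "\<not> (p = 0 \<and> q = 0)" using nontriv[OF aD a_notF] fa by auto
  have nb: "\<not> (p' = 0 \<and> q' = 0)" using nontriv[OF bD b_notF] fb by auto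
  have nab: "\<not> (r = 0 \<and> r' = 0)" using nontriv[OF abD ab_notF] fab by auto
  have r0: "r = 0"
  proof -
    have wc: "phi0 omg \<in> carrier dihedral8" using iso_carr[OF phi0_iso omega(1)] .
    have "chi (\<alpha> * \<beta>) (phii (phi0 omg)) = 0" using phii_phi0[OF omega(1)] chi0[of omg "\<alpha> * \<beta>", OF omega(2)] by simp
    then have "(r * fst (phi0 omg) + r' * snd (phi0 omg)) mod 2 = 0" using fab[OF wc] by simp
    then show ?thesis using omega(3) v(5) by auto
  qed
  have p1: "p = 1" using v rr rr' r0 na nb nab by auto
  show ?thesis
  proof (cases "q = 0")
    case True
    have "\<forall>s\<in>GD. lambdaD (phi0 s) = chi \<alpha> s"
    proof
      fix s assume s: "s \<in> GD"
      have "chi \<alpha> s = chi \<alpha> (phii (phi0 s))" using phii_phi0[OF s] by simp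
      also have "\<dots> = fst (phi0 s) mod 2" using fa[OF iso_carr[OF phi0_iso s]] p1 True by simp
      finally show "lambdaD (phi0 s) = chi \<alpha> s" by (simp add: lambdaD_def)
    qed
    then show ?thesis using phi0_iso by blast
  next
    case False
    then have q1: "q = 1" using v by auto
    have "\<forall>s\<in>GD. lambdaD ((thetaD \<circ> phi0) s) = chi \<alpha> s"
    proof
      fix s assume s: "s \<in> GD"
      have "chi \<alpha> s = chi \<alpha> (phii (phi0 s))" using phii_phi0[OF s] by simp
      also have "\<dots> = (fst (phi0 s) + snd (phi0 s)) mod 2" using fa[OF iso_carr[OF phi0_iso s]] p1 q1 by simp
      finally show "lambdaD ((thetaD \<circ> phi0) s) = chi \<alpha> s"
        by (simp add: lambdaD_def thetaD_def mod_mod_cancel)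
    qed
    moreover have "thetaD \<circ> phi0 \<in> iso (gal_group Dab F) dihedral8" using iso_set_trans[OF phi0_iso thetaD_iso] .
    ultimately show ?thesis by blast
  qed
qed

lemma psi_eta: "t \<in> GC \<Longrightarrow> etaC (psi0 t) = chi \<alpha> t"
proof -
  assume t: "t \<in> GC"
  have form: "chi \<alpha> (psii v) = (chi \<alpha> (psii 1) * v) mod 2" if v: "v \<in> carrier cyclic4" for v
  proof (rule Z4_char[where c = "\<lambda>v. chi \<alpha> (psii v)", OF _ _ v])
    show "\<And>u. u \<in> carrier cyclic4 \<Longrightarrow> chi \<alpha> (psii u) \<in> {0, 1}" by (rule chi_01)
    fix u w assume uw: "u \<in> carrier cyclic4" "w \<in> carrier cyclic4"
    show "chi \<alpha> (psii ((u + w) mod 4)) = (chi \<alpha> (psii u) + chi \<alpha> (psii w)) mod 2"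
      unfolding psii_mult[OF uw] by (rule chi_mult[OF C psii_carr[OF uw(1)] psii_carr[OF uw(2)] aCa aaF a_neq])
  qed
  have "chi \<alpha> (psii 1) = 1" using chi1[of tau0 \<alpha>, OF tau0_a a_neq] tau0_def by simp
  then have "chi \<alpha> (psii (psi0 t)) = psi0 t mod 2" using form[OF iso_carr[OF psi0_iso t]] by simp
  then show ?thesis using psii_psi0[OF t] by (simp add: etaC_def)
qed

end


context prop_ctx begin

definition phi where "phi = (SOME f. f \<in> iso (gal_group Dab F) dihedral8 \<and> (\<forall>s\<in>GD. lambdaD (f s) = chi \<alpha> s))"

lemma phi: "phi \<in> iso (gal_group Dab F) dihedral8" "\<And>s. s \<in> GD \<Longrightarrow> lambdaD (phi s) = chi \<alpha> s"
proof -
  have "\<exists>f. f \<in> iso (gal_group Dab F) dihedral8 \<and> (\<forall>s\<in>GD. lambdaD (f s) = chi \<alpha> s)" using phi_exists by blast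
  then have "phi \<in> iso (gal_group Dab F) dihedral8 \<and> (\<forall>s\<in>GD. lambdaD (phi s) = chi \<alpha> s)"
    unfolding phi_def by (rule someI_ex)
  then show "phi \<in> iso (gal_group Dab F) dihedral8" "\<And>s. s \<in> GD \<Longrightarrow> lambdaD (phi s) = chi \<alpha> s" by auto
qed

abbreviation "GK \<equiv> carrier (gal_group K F)"

lemma rD: "s \<in> GK \<Longrightarrow> restr s Dab \<in> GD" "s \<in> GK \<Longrightarrow> y \<in> Dab \<Longrightarrow> s y \<in> Dab"
  using restrict_gal[OF galD finGD K_sf DK] by blast+
lemma rC: "s \<in> GK \<Longrightarrow> restr s Ca \<in> GC" "s \<in> GK \<Longrightarrow> y \<in> Ca \<Longrightarrow> s y \<in> Ca"
  using restrict_gal[OF galC finGC K_sf CK] by blast+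

lemma chi_restr: "x \<in> L \<Longrightarrow> chi x (restr s L) = chi x s"
  by (simp add: chi_def restr_def)

lemma restr_comp: "(\<And>y. y \<in> L \<Longrightarrow> s' y \<in> L) \<Longrightarrow> restr (s \<circ> s') L = restr s L \<circ> restr s' L"
  by (auto simp: restr_def fun_eq_iff)

definition Phi where "Phi s = (phi (restr s Dab), psi0 (restr s Ca))"

lemma pb_carrier: "carrier DwedgeC = {(u,v). u \<in> carrier dihedral8 \<and> v \<in> carrier cyclic4 \<and> lambdaD u = etaC v}"
  by (simp add: pullback_def)
lemma pb_mult: "(u,v) \<otimes>\<^bsub>DwedgeC\<^esub> (u',v') = (u \<otimes>\<^bsub>dihedral8\<^esub> u', v \<otimes>\<^bsub>cyclic4\<^esub> v')"
  by (simp add: pullback_def)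

lemma Phi_carr: assumes s: "s \<in> GK" shows "Phi s \<in> carrier DwedgeC"
proof -
  have "lambdaD (phi (restr s Dab)) = chi \<alpha> s" using phi(2)[OF rD(1)[OF s]] chi_restr[OF aD] by simp
  moreover have "etaC (psi0 (restr s Ca)) = chi \<alpha> s" using psi_eta[OF rC(1)[OF s]] chi_restr[OF aCa] by simp
  ultimately show ?thesis unfolding Phi_def pb_carrier
    using iso_carr[OF phi(1) rD(1)[OF s]] iso_carr[OF psi0_iso rC(1)[OF s]] by simp
qed

lemma Phi_hom: "Phi \<in> hom (gal_group K F) DwedgeC"
proof (rule homI)
  fix s assume "s \<in> GK" then show "Phi s \<in> carrier DwedgeC" by (rule Phi_carr)
next
  fix s s' assume s: "s \<in> GK" and s': "s' \<in> GK"
  have d: "restr (s \<circ> s') Dab = restr s Dab \<circ> restr s' Dab" by (rule restr_comp) (rule rD(2)[OF s'])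
  have c: "restr (s \<circ> s') Ca = restr s Ca \<circ> restr s' Ca" by (rule restr_comp) (rule rC(2)[OF s'])
  have "phi (restr s Dab \<circ> restr s' Dab) = phi (restr s Dab) \<otimes>\<^bsub>dihedral8\<^esub> phi (restr s' Dab)"
    using iso_mult[OF phi(1) rD(1)[OF s] rD(1)[OF s']] by simp
  moreover have "psi0 (restr s Ca \<circ> restr s' Ca) = psi0 (restr s Ca) \<otimes>\<^bsub>cyclic4\<^esub> psi0 (restr s' Ca)"
    using iso_mult[OF psi0_iso rC(1)[OF s] rC(1)[OF s']] by simp
  ultimately show "Phi (s \<otimes>\<^bsub>gal_group K F\<^esub> s') = Phi s \<otimes>\<^bsub>DwedgeC\<^esub> Phi s'"
    unfolding Phi_def gal_mult d c pb_mult by simp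
qed

lemma Phi_inj: "inj_on Phi GK"
proof (rule inj_onI)
  fix s s' assume s: "s \<in> GK" and s': "s' \<in> GK" and e: "Phi s = Phi s'"
  have "phi (restr s Dab) = phi (restr s' Dab)" using e by (simp add: Phi_def)
  then have ed: "restr s Dab = restr s' Dab" using iso_inj[OF phi(1)] rD(1)[OF s] rD(1)[OF s'] by (metis inj_onD)
  have "psi0 (restr s Ca) = psi0 (restr s' Ca)" using e by (simp add: Phi_def)
  then have ec: "restr s Ca = restr s' Ca" using iso_inj[OF psi0_iso] rC(1)[OF s] rC(1)[OF s'] by (metis inj_onD)
  have onD: "s y = s' y" if "y \<in> Dab" for y using fun_cong[OF ed, of y] that by (simp add: restr_def)
  have onC: "s y = s' y" if "y \<in> Ca" for y using fun_cong[OF ec, of y] that by (simp add: restr_def)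
  show "s = s'"
  proof
    fix x show "s x = s' x"
    proof (cases "x \<in> K")
      case True
      then obtain u v where uv: "u \<in> Dab" "v \<in> Dab" "x = u + v * \<gamma>" using K_dec by blast
      have k: "u \<in> K" "v \<in> K" using uv DK by auto
      have "s x = s u + s v * s \<gamma>"
        using uv fh_add[OF gal_fhom[OF s] k(1) sf_mult[OF K_sf k(2) gK]] fh_mult[OF gal_fhom[OF s] k(2) gK] by simp
      also have "\<dots> = s' u + s' v * s' \<gamma>" using onD onC uv gC by simp
      also have "\<dots> = s' x"
        using uv fh_add[OF gal_fhom[OF s'] k(1) sf_mult[OF K_sf k(2) gK]] fh_mult[OF gal_fhom[OF s'] k(2) gK] by simp
      finally show ?thesis .
    next
      case False then show ?thesis using gal_out s s' by metis
    qed
  qed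
qed

lemma same_chi: assumes s1: "s1 \<in> GD" and t: "t \<in> GC" and e: "chi \<alpha> s1 = chi \<alpha> t" shows "s1 \<alpha> = t \<alpha>"
proof -
  have "s1 \<alpha> = \<alpha> \<or> s1 \<alpha> = - \<alpha>" using gal_sign[OF D s1 aD aaF] .
  moreover have "t \<alpha> = \<alpha> \<or> t \<alpha> = - \<alpha>" using gal_sign[OF C t aCa aaF] .
  ultimately show ?thesis using e chi0[of s1 \<alpha>] chi0[of t \<alpha>] chi1[of s1 \<alpha>, OF _ a_neq] chi1[of t \<alpha>, OF _ a_neq] by auto
qed

lemma restr_self: "s \<in> carrier (gal_group L F') \<Longrightarrow> restr s L = s"
  by (auto simp: restr_def fun_eq_iff gal_out)

lemma Phi_surj: "carrier DwedgeC \<subseteq> Phi ` GK"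
proof
  fix p assume p: "p \<in> carrier DwedgeC"
  then obtain u v where uv: "p = (u, v)" "u \<in> carrier dihedral8" "v \<in> carrier cyclic4" "lambdaD u = etaC v"
    unfolding pb_carrier by blast
  define s1 where "s1 = inv_into GD phi u"
  define t where "t = psii v"
  have s1: "s1 \<in> GD" unfolding s1_def using iso_inv_carr[OF phi(1) uv(2)] .
  have ps1: "phi s1 = u" unfolding s1_def using iso_inv_right[OF phi(1) uv(2)] .
  have t: "t \<in> GC" unfolding t_def using psii_carr[OF uv(3)] .
  have pt: "psi0 t = v" unfolding t_def using psi0_psii[OF uv(3)] .
  have "chi \<alpha> s1 = chi \<alpha> t" using phi(2)[OF s1] psi_eta[OF t] ps1 pt uv(4) by simp
  then have st: "s1 \<alpha> = t \<alpha>" using same_chi[OF s1 t] by blast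
  define s where "s = ext s1 t"
  have sK: "s \<in> GK" unfolding s_def using ext_gal(1)[OF s1 t st] .
  have "restr s Dab = s1"
  proof
    fix x show "restr s Dab x = s1 x"
      using ext_gal(2)[OF s1 t st] gal_out[OF s1] unfolding s_def restr_def by auto
  qed
  moreover have "restr s Ca = t"
  proof
    fix x show "restr s Ca x = t x"
      using ext_gal(3)[OF s1 t st] gal_out[OF t] unfolding s_def restr_def by auto
  qed
  ultimately have "Phi s = p" unfolding Phi_def using ps1 pt uv(1) by simp
  then show "p \<in> Phi ` GK" using sK by blast
qed

lemma Phi_iso: "Phi \<in> iso (gal_group K F) DwedgeC"
proof (rule isoI[OF Phi_hom])
  have "Phi ` GK \<subseteq> carrier DwedgeC" using Phi_carr by blast
  then have "Phi ` GK = carrier DwedgeC" using Phi_surj by blast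
  then show "bij_betw Phi GK (carrier DwedgeC)" using Phi_inj by (simp add: bij_betw_def)
qed

lemma fixed_K: "fixed_field K F = F"
proof
  show "F \<subseteq> fixed_field K F" unfolding fixed_field_def using FK gal_fix by blast
  show "fixed_field K F \<subseteq> F"
  proof
    fix x assume x: "x \<in> fixed_field K F"
    then have xK: "x \<in> K" and fx: "\<And>s. s \<in> GK \<Longrightarrow> s x = x" unfolding fixed_field_def by auto
    obtain u v where uv: "u \<in> Dab" "v \<in> Dab" "x = u + v * \<gamma>" using K_dec[OF xK] by blast
    have idD: "id \<in> GD" by (rule gal_id)
    have ir: "id \<alpha> = rho \<alpha>" using rho_a by simp
    have "ext id rho x = id u + id v * rho \<gamma>" using ext_val[OF uv(1) uv(2)] uv(3) by blast
    also have "\<dots> = u + (- v) * \<gamma>" using rho_g by simp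
    finally have e2: "ext id rho x = u + (- v) * \<gamma>" .
    have e1: "ext id rho x = x" using fx[OF ext_gal(1)[OF idD rho_G ir]] .
    have "u + v * \<gamma> = u + (- v) * \<gamma>" using e1 e2 uv(3) by metis
    then have "v = - v" using dec_unique[OF uv(1) uv(2) uv(1)] uv(2) D sf_neg by blast
    then have "v = 0" using neg_ne[OF char2] by blast
    then have xD: "x \<in> Dab" and xu: "x = u" using uv by auto
    have "\<forall>s1\<in>GD. s1 x = x"
    proof
      fix s1 assume s1: "s1 \<in> GD"
      define t where "t = (if s1 \<alpha> = \<alpha> then id else tau0)"
      have t: "t \<in> GC" unfolding t_def by (simp add: gal_id tau0_G)
      have st: "s1 \<alpha> = t \<alpha>" unfolding t_def using gal_sign[OF D s1 aD aaF] tau0_a by auto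
      have "ext s1 t x = s1 x" using ext_gal(2)[OF s1 t st xD] .
      then show "s1 x = x" using fx[OF ext_gal(1)[OF s1 t st]] by simp
    qed
    then have "x \<in> fixed_field Dab F" unfolding fixed_field_def using xD by blast
    then show "x \<in> F" using ffD by simp
  qed
qed

lemma deg_K: "\<exists>n. ext_degree F K n"
proof -
  obtain n where "ext_degree F Dab n" using galD unfolding galois_def by blast
  then obtain B where B: "finite B" "card B = n" "B \<subseteq> Dab"
    and ind: "\<And>c::'a \<Rightarrow> 'a. (\<forall>x\<in>B. c x \<in> F) \<and> (\<Sum>x\<in>B. c x * x) = 0 \<Longrightarrow> (\<forall>x\<in>B. c x = 0)"
    and spn: "\<And>y. y \<in> Dab \<Longrightarrow> \<exists>c::'a \<Rightarrow> 'a. (\<forall>x\<in>B. c x \<in> F) \<and> y = (\<Sum>x\<in>B. c x * x)"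
    unfolding ext_degree_def by blast
  have B0: "0 \<notin> B"
  proof
    assume "0 \<in> B"
    define c :: "'a \<Rightarrow> 'a" where "c = (\<lambda>x. if x = 0 then 1 else 0)"
    have "\<forall>x\<in>B. c x \<in> F" using F by (simp add: c_def sf_0 sf_1)
    moreover have "(\<Sum>x\<in>B. c x * x) = 0" by (rule sum.neutral) (simp add: c_def)
    ultimately have "c 0 = 0" using ind \<open>0 \<in> B\<close> by blast
    then show False by (simp add: c_def)
  qed
  define g where "g = (\<lambda>x. x * \<gamma>)"
  define B2 where "B2 = B \<union> g ` B"
  have ginj: "inj_on g B" unfolding g_def using g_ne0 by (simp add: inj_on_def)
  have disj: "B \<inter> g ` B = {}"
  proof (rule ccontr)
    assume "B \<inter> g ` B \<noteq> {}"
    then obtain x y where xy: "x \<in> B" "y \<in> B" "x = y * \<gamma>" unfolding g_def by blast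
    have "y \<noteq> 0" using xy(2) B0 by auto
    then have "\<gamma> = x / y" using xy(3) by simp
    moreover have "x / y \<in> Dab" using sf_divide[OF D] xy(1,2) B(3) by blast
    ultimately have "\<gamma> \<in> Dab" by simp
    then show False using g_notD by blast
  qed
  have fin2: "finite B2" unfolding B2_def using B by simp
  have "card B2 = card B + card (g ` B)" unfolding B2_def using B(1) disj by (simp add: card_Un_disjoint)
  then have card2: "card B2 = n + n" using card_image[OF ginj] B(2) by simp
  have sub2: "B2 \<subseteq> K"
  proof
    fix z assume "z \<in> B2"
    then consider "z \<in> B" | x where "x \<in> B" "z = x * \<gamma>" unfolding B2_def g_def by blast
    then show "z \<in> K"
    proof cases
      case 1 then show ?thesis using B(3) DK by blast
    next
      case 2 then have "x \<in> K" using B(3) DK by blast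
      then show ?thesis using 2 sf_mult[OF K_sf _ gK] by simp
    qed
  qed
  have sum2: "(\<Sum>z\<in>B2. c z * z) = (\<Sum>x\<in>B. c x * x) + (\<Sum>x\<in>B. c (x * \<gamma>) * x) * \<gamma>" for c
  proof -
    have "(\<Sum>z\<in>B2. c z * z) = (\<Sum>x\<in>B. c x * x) + (\<Sum>z\<in>g ` B. c z * z)"
      unfolding B2_def using B disj by (simp add: sum.union_disjoint)
    also have "(\<Sum>z\<in>g ` B. c z * z) = (\<Sum>x\<in>B. c (g x) * g x)" using sum.reindex[OF ginj] by simp
    also have "\<dots> = (\<Sum>x\<in>B. c (x * \<gamma>) * x) * \<gamma>" unfolding g_def by (simp add: sum_distrib_right mult.assoc)
    finally show ?thesis .
  qed
  have ind2: "\<forall>z\<in>B2. c z = 0" if c: "\<forall>z\<in>B2. c z \<in> F" "(\<Sum>z\<in>B2. c z * z) = 0" for c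
  proof -
    have cB: "\<forall>x\<in>B. c x \<in> F" using c(1) B2_def by blast
    have cgB: "\<forall>x\<in>B. c (x * \<gamma>) \<in> F" using c(1) B2_def g_def by blast
    have U: "(\<Sum>x\<in>B. c x * x) \<in> Dab" using cB B FD D by (intro sf_sum) (auto intro!: sf_mult)
    have V: "(\<Sum>x\<in>B. c (x * \<gamma>) * x) \<in> Dab" using cgB B FD D by (intro sf_sum) (auto intro!: sf_mult)
    have "(\<Sum>x\<in>B. c x * x) + (\<Sum>x\<in>B. c (x * \<gamma>) * x) * \<gamma> = 0 + 0 * \<gamma>" using c(2) sum2 by simp
    then have UV: "(\<Sum>x\<in>B. c x * x) = 0" "(\<Sum>x\<in>B. c (x * \<gamma>) * x) = 0"
      using dec_unique[OF U V sf_0[OF D] sf_0[OF D]] by auto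
    have "\<forall>x\<in>B. c x = 0" using ind cB UV(1) by blast
    moreover have "\<forall>x\<in>B. c (x * \<gamma>) = 0" using ind[of "\<lambda>x. c (x * \<gamma>)"] cgB UV(2) by blast
    ultimately show ?thesis unfolding B2_def g_def by blast
  qed
  have spn2: "\<exists>c. (\<forall>z\<in>B2. c z \<in> F) \<and> y = (\<Sum>z\<in>B2. c z * z)" if y: "y \<in> K" for y
  proof -
    obtain u v where uv: "u \<in> Dab" "v \<in> Dab" "y = u + v * \<gamma>" using K_dec[OF y] by blast
    obtain c1 where c1: "\<forall>x\<in>B. c1 x \<in> F" "u = (\<Sum>x\<in>B. c1 x * x)" using spn[OF uv(1)] by blast
    obtain c2 where c2: "\<forall>x\<in>B. c2 x \<in> F" "v = (\<Sum>x\<in>B. c2 x * x)" using spn[OF uv(2)] by blast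
    define c where "c = (\<lambda>z. if z \<in> B then c1 z else c2 (z / \<gamma>))"
    have cg: "c (x * \<gamma>) = c2 x" if "x \<in> B" for x
    proof -
      have "x * \<gamma> \<notin> B" using disj that unfolding g_def by blast
      then show ?thesis unfolding c_def using g_ne0 by simp
    qed
    have "\<forall>z\<in>B2. c z \<in> F" unfolding B2_def g_def using c1 c2 cg by (auto simp: c_def)
    moreover have "(\<Sum>z\<in>B2. c z * z) = y"
    proof -
      have "(\<Sum>x\<in>B. c x * x) = u" using c1 by (simp add: c_def)
      moreover have "(\<Sum>x\<in>B. c (x * \<gamma>) * x) = v" using c2 cg by simp
      ultimately show ?thesis using sum2 uv by simp
    qed
    ultimately show ?thesis by metis
  qed
  have "ext_degree F K (n + n)" unfolding ext_degree_def
    using fin2 card2 sub2 ind2 spn2 by blast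
  then show ?thesis by blast
qed

lemma main: "galois F (adjoin Dab Ca) \<and> gal_group (adjoin Dab Ca) F \<cong> DwedgeC"
proof -
  have "galois F K" unfolding galois_def using F K_sf FK deg_K fixed_K by blast
  moreover have "gal_group K F \<cong> DwedgeC" using Phi_iso by (rule is_isoI)
  ultimately show ?thesis unfolding K_def by blast
qed

end

theorem proposition3p1:
  fixes F Dab Ca :: "'a::alg_closed_field set" and a b \<alpha> \<beta> :: 'a
  assumes "is_subfield F"
    and "\<forall>x. algebraic_over F x"
    and "(2::'a) \<noteq> 0"
    and "a \<in> F" and "b \<in> F"
    and "\<alpha>\<^sup>2 = a" and "\<beta>\<^sup>2 = b"
    and "ext_degree F (adjoin F {\<alpha>, \<beta>}) 4"
    and "galois F Dab" and "adjoin F {\<alpha>, \<beta>} \<subseteq> Dab"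
    and "gal_group Dab F \<cong> dihedral8"
    and "gal_group Dab (adjoin F {\<alpha> * \<beta>}) \<cong> cyclic4"
    and "galois F Ca" and "gal_group Ca F \<cong> cyclic4"
    and "adjoin F {\<alpha>} \<subseteq> Ca"
  shows "galois F (adjoin Dab Ca) \<and> gal_group (adjoin Dab Ca) F \<cong> DwedgeC"
proof -
  interpret prop_ctx F Dab Ca a b \<alpha> \<beta>
    by (unfold_locales) (use assms in auto)
  show ?thesis by (rule main)
qed


end
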